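(* Let $\mathfrak{X}=\mathfrak{X}_{(\Gamma_q,i_q)_q}$ be a Bourgain–Delbaen space, let $\Gamma'$ be a self-determined subset of $\Gamma$, and let $\mathfrak{X}'=\mathfrak{X}_{(\Gamma'_{q_s},i'_{q_s})_s}$ be the Bourgain–Delbaen space determined by $\Gamma'$ (as described in the context). Let $\gamma\in\Gamma'$ and assume there are a finite subset $F\subseteq\Gamma'$, scalars $(\lambda_\eta)_{\eta\in F}$ and intervals $(E_\eta)_{\eta\in F}$ of $\mathbb{N}$ such that $c_\gamma^*=\sum_{\eta\in F}\lambda_\eta e_\eta^*\circ P_{E_\eta}$ on $\mathfrak{X}$. Then, on $\mathfrak{X}'$, $c_\gamma^{\prime*}=\sum_{\eta\in F}\lambda_\eta e_\eta^*\circ P'_{E'_\eta}$, where for $\eta\in F$, $E'_\eta=\{s:q_s\in E_\eta\}$.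
   Context: Bourgain–Delbaen spaces: given a strictly increasing sequence $(\Gamma_q)_q$ of non-empty finite sets with union $\Gamma$ and linear extension operators $i_q:\ell_\infty(\Gamma_q)\to\ell_\infty(\Gamma)$ ($i_q(x)|_{\Gamma_q}=x$) with $\sup_q\|i_q\|<\infty$ that are compatible (for $p<q$, $i_p=i_q\circ r_q\circ i_p$, with $r_q$ restriction onto $\Gamma_q$), set $\Delta_1=\Gamma_1$, $\Delta_{q+1}=\Gamma_{q+1}\setminus\Gamma_q$, $d_\gamma=i_q(e_\gamma)$ for $\gamma\in\Delta_q$; $\mathfrak{X}_{(\Gamma_q,i_q)_q}$ is the closed span of $\{d_\gamma\}$ in $\ell_\infty(\Gamma)$, with FDD $M_q=\langle d_\gamma:\gamma\in\Delta_q\rangle$ and associated projections $P_E$ onto $\bigoplus_{q\in E}M_q$. $e_\gamma^*$ denotes evaluation at $\gamma$ restricted to the space, $(d_\gamma^* )$ the functionals biorthogonal to $(d_\gamma)$, and $c_\gamma^*=e_\gamma^*-d_\gamma^*$. An infinite $\Gamma'\subseteq\Gamma$ is self-determined if each $d_\gamma^*$, $\gamma\in\Gamma'$, lies in the span of $\{e_\eta^*:\eta\in\Gamma'\}$. For such $\Gamma'$: $\{q:\Gamma'\cap\Delta_q\neq\varnothing\}=\{q_0<q_1<\cdots\}$ (indices $s=0,1,2,\dots$), $\Gamma'_q=\Gamma'\cap\Gamma_q$, $R$ = restriction onto $\Gamma'$, $i'_{q_s}(x)=R(i_{q_s}(x))$ for $x\in\ell_\infty(\Gamma'_{q_s})$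 (extended by zero); $(\Gamma'_{q_s},i'_{q_s})_s$ defines the Bourgain–Delbaen space $\mathfrak{X}'$ with basis vectors $d'_\gamma$ ($\gamma\in\Gamma'$), biorthogonal functionals $d_\gamma^{\prime*}$, $c_\gamma^{\prime*}=e_\gamma^*-d_\gamma^{\prime*}$, FDD $M'_s=\langle d'_\gamma:\gamma\in\Gamma'\cap\Delta_{q_s}\rangle$ and associated projections $P'_{E'}$ onto $\bigoplus_{s\in E'}M'_s$. *)

theory Defs
  imports Complex_Main "HOL-Library.Infinite_Set"
begin

text \<open>Elements of l_infty(Gamma) are
  represented as functions of type 'a => real that vanish outside Gamma.
  A Bourgain--Delbaen datum is a pair (G, I): G q is the q-th set Gamma_q
  (indexed from q = 0) and I q is the extension operator i_q, acting on
  functions supported in G q (i.e. on l_infty(Gamma_q) extended by zero).\<close>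

definition BD_Gamma :: "(nat \<Rightarrow> 'a set) \<Rightarrow> 'a set" where
  "BD_Gamma G = (\<Union>q. G q)"

fun BD_Delta :: "(nat \<Rightarrow> 'a set) \<Rightarrow> nat \<Rightarrow> 'a set" where
  "BD_Delta G 0 = G 0"
| "BD_Delta G (Suc q) = G (Suc q) - G q"

definition restr :: "'a set \<Rightarrow> ('a \<Rightarrow> real) \<Rightarrow> ('a \<Rightarrow> real)" where
  "restr A x = (\<lambda>\<eta>. if \<eta> \<in> A then x \<eta> else 0)"

definition supported :: "'a set \<Rightarrow> ('a \<Rightarrow> real) \<Rightarrow> bool" where
  "supported A x \<longleftrightarrow> (\<forall>\<eta>. \<eta> \<notin> A \<longrightarrow> x \<eta> = 0)"

definition BD_datum :: "(nat \<Rightarrow> 'a set) \<Rightarrow> (nat \<Rightarrow> ('a \<Rightarrow> real) \<Rightarrow> ('a \<Rightarrow> real)) \<Rightarrow> bool" where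
  "BD_datum G I \<longleftrightarrow>
     (\<forall>q. finite (G q) \<and> G q \<noteq> {} \<and> G q \<subset> G (Suc q)) \<and>
     (\<forall>q x. supported (G q) x \<longrightarrow> supported (BD_Gamma G) (I q x)) \<and>
     (\<forall>q x y. supported (G q) x \<longrightarrow> supported (G q) y \<longrightarrow>
          I q (\<lambda>\<eta>. x \<eta> + y \<eta>) = (\<lambda>\<eta>. I q x \<eta> + I q y \<eta>)) \<and>
     (\<forall>q x c. supported (G q) x \<longrightarrow> I q (\<lambda>\<eta>. c * x \<eta>) = (\<lambda>\<eta>. c * I q x \<eta>)) \<and>
     (\<forall>q x. supported (G q) x \<longrightarrow> (\<forall>\<eta>\<in>G q. I q x \<eta> = x \<eta>)) \<and>
     (\<exists>C. \<forall>q x. supported (G q) x \<longrightarrow> (\<forall>\<eta>. \<bar>I q x \<eta>\<bar> \<le> C * (MAX \<zeta>\<in>G q. \<bar>x \<zeta>\<bar>))) \<and>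
     (\<forall>p q x. p < q \<longrightarrow> supported (G p) x \<longrightarrow> I p x = I q (restr (G q) (I p x)))"

definition BD_level :: "(nat \<Rightarrow> 'a set) \<Rightarrow> 'a \<Rightarrow> nat" where
  "BD_level G \<gamma> = (LEAST q. \<gamma> \<in> G q)"

definition BD_d :: "(nat \<Rightarrow> 'a set) \<Rightarrow> (nat \<Rightarrow> ('a \<Rightarrow> real) \<Rightarrow> ('a \<Rightarrow> real)) \<Rightarrow> 'a \<Rightarrow> ('a \<Rightarrow> real)" where
  "BD_d G I \<gamma> = I (BD_level G \<gamma>) (\<lambda>\<eta>. if \<eta> = \<gamma> then 1 else 0)"

definition supn :: "('a \<Rightarrow> real) \<Rightarrow> real" where
  "supn x = (SUP \<eta>. \<bar>x \<eta>\<bar>)"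

definition BD_span :: "(nat \<Rightarrow> 'a set) \<Rightarrow> (nat \<Rightarrow> ('a \<Rightarrow> real) \<Rightarrow> ('a \<Rightarrow> real)) \<Rightarrow> ('a \<Rightarrow> real) set" where
  "BD_span G I = {(\<lambda>\<eta>. \<Sum>\<delta>\<in>F. c \<delta> * BD_d G I \<delta> \<eta>) | F c. finite F \<and> F \<subseteq> BD_Gamma G}"

definition BD_space :: "(nat \<Rightarrow> 'a set) \<Rightarrow> (nat \<Rightarrow> ('a \<Rightarrow> real) \<Rightarrow> ('a \<Rightarrow> real)) \<Rightarrow> ('a \<Rightarrow> real) set" where
  "BD_space G I = {x. \<forall>\<epsilon>>0. \<exists>y\<in>BD_span G I. \<forall>\<eta>. \<bar>x \<eta> - y \<eta>\<bar> \<le> \<epsilon>}"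

text \<open>Biorthogonal functionals d_gamma^*: the bounded linear functionals on the space with
  d_gamma^*(d_delta) = [gamma = delta] (set to 0 off the space to make them unique).\<close>
definition BD_dstar :: "(nat \<Rightarrow> 'a set) \<Rightarrow> (nat \<Rightarrow> ('a \<Rightarrow> real) \<Rightarrow> ('a \<Rightarrow> real)) \<Rightarrow> 'a \<Rightarrow> (('a \<Rightarrow> real) \<Rightarrow> real)" where
  "BD_dstar G I \<gamma> = (THE f.
      (\<forall>x\<in>BD_space G I. \<forall>y\<in>BD_space G I. f (\<lambda>\<eta>. x \<eta> + y \<eta>) = f x + f y) \<and>
      (\<forall>x\<in>BD_space G I. \<forall>c. f (\<lambda>\<eta>. c * x \<eta>) = c * f x) \<and>
      (\<exists>C. \<forall>x\<in>BD_space G I. \<bar>f x\<bar> \<le> C * supn x) \<and>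
      (\<forall>\<delta>\<in>BD_Gamma G. f (BD_d G I \<delta>) = (if \<delta> = \<gamma> then 1 else 0)) \<and>
      (\<forall>x. x \<notin> BD_space G I \<longrightarrow> f x = 0))"

definition BD_cstar :: "(nat \<Rightarrow> 'a set) \<Rightarrow> (nat \<Rightarrow> ('a \<Rightarrow> real) \<Rightarrow> ('a \<Rightarrow> real)) \<Rightarrow> 'a \<Rightarrow> (('a \<Rightarrow> real) \<Rightarrow> real)" where
  "BD_cstar G I \<gamma> = (\<lambda>x. x \<gamma> - BD_dstar G I \<gamma> x)"

text \<open>FDD projections P_E: the bounded linear operator on the space into the space with
  P_E d_delta = d_delta if the level of delta lies in E and 0 otherwise
  (set to 0 off the space to make it unique).\<close>
definition BD_proj :: "(nat \<Rightarrow> 'a set) \<Rightarrow> (nat \<Rightarrow> ('a \<Rightarrow> real) \<Rightarrow> ('a \<Rightarrow> real)) \<Rightarrow> nat set \<Rightarrow> (('a \<Rightarrow> real) \<Rightarrow> ('a \<Rightarrow> real))" where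
  "BD_proj G I E = (THE P.
      (\<forall>x\<in>BD_space G I. P x \<in> BD_space G I) \<and>
      (\<forall>x\<in>BD_space G I. \<forall>y\<in>BD_space G I. P (\<lambda>\<eta>. x \<eta> + y \<eta>) = (\<lambda>\<eta>. P x \<eta> + P y \<eta>)) \<and>
      (\<forall>x\<in>BD_space G I. \<forall>c. P (\<lambda>\<eta>. c * x \<eta>) = (\<lambda>\<eta>. c * P x \<eta>)) \<and>
      (\<exists>C. \<forall>x\<in>BD_space G I. \<forall>\<eta>. \<bar>P x \<eta>\<bar> \<le> C * supn x) \<and>
      (\<forall>\<delta>\<in>BD_Gamma G. P (BD_d G I \<delta>) =
          (if BD_level G \<delta> \<in> E then BD_d G I \<delta> else (\<lambda>_. 0))) \<and>
      (\<forall>x. x \<notin> BD_space G I \<longrightarrow> P x = (\<lambda>_. 0)))"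

definition nat_interval :: "nat set \<Rightarrow> bool" where
  "nat_interval E \<longleftrightarrow> (\<forall>a b c. a \<in> E \<longrightarrow> c \<in> E \<longrightarrow> a \<le> b \<longrightarrow> b \<le> c \<longrightarrow> b \<in> E)"

definition self_determined :: "(nat \<Rightarrow> 'a set) \<Rightarrow> (nat \<Rightarrow> ('a \<Rightarrow> real) \<Rightarrow> ('a \<Rightarrow> real)) \<Rightarrow> 'a set \<Rightarrow> bool" where
  "self_determined G I \<Gamma>' \<longleftrightarrow> \<Gamma>' \<subseteq> BD_Gamma G \<and> infinite \<Gamma>' \<and>
     (\<forall>\<gamma>\<in>\<Gamma>'. \<exists>F a. finite F \<and> F \<subseteq> \<Gamma>' \<and>
        (\<forall>x\<in>BD_space G I. BD_dstar G I \<gamma> x = (\<Sum>\<eta>\<in>F. a \<eta> * x \<eta>)))"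

definition sd_q :: "(nat \<Rightarrow> 'a set) \<Rightarrow> 'a set \<Rightarrow> nat \<Rightarrow> nat" where
  "sd_q G \<Gamma>' = enumerate {q. \<Gamma>' \<inter> BD_Delta G q \<noteq> {}}"

definition sd_G :: "(nat \<Rightarrow> 'a set) \<Rightarrow> 'a set \<Rightarrow> nat \<Rightarrow> 'a set" where
  "sd_G G \<Gamma>' s = \<Gamma>' \<inter> G (sd_q G \<Gamma>' s)"

definition sd_I :: "(nat \<Rightarrow> 'a set) \<Rightarrow> (nat \<Rightarrow> ('a \<Rightarrow> real) \<Rightarrow> ('a \<Rightarrow> real)) \<Rightarrow> 'a set \<Rightarrow> nat \<Rightarrow> ('a \<Rightarrow> real) \<Rightarrow> ('a \<Rightarrow> real)" where
  "sd_I G I \<Gamma>' s x = restr \<Gamma>' (I (sd_q G \<Gamma>' s) x)"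

end

theory Submission
  imports Defs
begin


definition bnd :: "('a \<Rightarrow> real) \<Rightarrow> bool" where
  "bnd x \<longleftrightarrow> (\<exists>M. \<forall>\<eta>. \<bar>x \<eta>\<bar> \<le> M)"

definition dpred where
  "dpred G I \<gamma> f \<longleftrightarrow>
      (\<forall>x\<in>BD_space G I. \<forall>y\<in>BD_space G I. f (\<lambda>\<eta>. x \<eta> + y \<eta>) = f x + f y) \<and>
      (\<forall>x\<in>BD_space G I. \<forall>c. f (\<lambda>\<eta>. c * x \<eta>) = c * f x) \<and>
      (\<exists>C. \<forall>x\<in>BD_space G I. \<bar>f x\<bar> \<le> C * supn x) \<and>
      (\<forall>\<delta>\<in>BD_Gamma G. f (BD_d G I \<delta>) = (if \<delta> = \<gamma> then 1 else 0)) \<and>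
      (\<forall>x. x \<notin> BD_space G I \<longrightarrow> f x = 0)"

definition ppred where
  "ppred G I E P \<longleftrightarrow>
      (\<forall>x\<in>BD_space G I. P x \<in> BD_space G I) \<and>
      (\<forall>x\<in>BD_space G I. \<forall>y\<in>BD_space G I. P (\<lambda>\<eta>. x \<eta> + y \<eta>) = (\<lambda>\<eta>. P x \<eta> + P y \<eta>)) \<and>
      (\<forall>x\<in>BD_space G I. \<forall>c. P (\<lambda>\<eta>. c * x \<eta>) = (\<lambda>\<eta>. c * P x \<eta>)) \<and>
      (\<exists>C. \<forall>x\<in>BD_space G I. \<forall>\<eta>. \<bar>P x \<eta>\<bar> \<le> C * supn x) \<and>
      (\<forall>\<delta>\<in>BD_Gamma G. P (BD_d G I \<delta>) =
          (if BD_level G \<delta> \<in> E then BD_d G I \<delta> else (\<lambda>_. 0))) \<and>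
      (\<forall>x. x \<notin> BD_space G I \<longrightarrow> P x = (\<lambda>_. 0))"

lemma dstar_THE: "BD_dstar G I \<gamma> = (THE f. dpred G I \<gamma> f)"
  unfolding BD_dstar_def dpred_def ..

lemma proj_THE: "BD_proj G I E = (THE P. ppred G I E P)"
  unfolding BD_proj_def ppred_def ..

lemma supn_ge: "bnd x \<Longrightarrow> \<bar>x \<eta>\<bar> \<le> supn x"
  unfolding supn_def bnd_def
  by (rule cSUP_upper) (auto simp: bdd_above_def)

lemma supn_le: "(\<And>\<eta>. \<bar>x \<eta>\<bar> \<le> e) \<Longrightarrow> supn x \<le> e"
  unfolding supn_def by (rule cSUP_least) auto

lemma supn_nonneg: "bnd x \<Longrightarrow> 0 \<le> supn x"
  using supn_ge[of x undefined] by linarith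

lemma bnd_add: "bnd x \<Longrightarrow> bnd y \<Longrightarrow> bnd (\<lambda>\<eta>. x \<eta> + y \<eta>)"
  unfolding bnd_def
proof (elim exE)
  fix M N assume "\<forall>\<eta>. \<bar>x \<eta>\<bar> \<le> M" "\<forall>\<eta>. \<bar>y \<eta>\<bar> \<le> N"
  then show "\<exists>M. \<forall>\<eta>. \<bar>x \<eta> + y \<eta>\<bar> \<le> M"
  proof (intro exI[of _ "M+N"] allI)
    fix \<eta> have "\<bar>x \<eta>\<bar> \<le> M" "\<bar>y \<eta>\<bar> \<le> N" using \<open>\<forall>\<eta>. \<bar>x \<eta>\<bar> \<le> M\<close> \<open>\<forall>\<eta>. \<bar>y \<eta>\<bar> \<le> N\<close> by auto
    then show "\<bar>x \<eta> + y \<eta>\<bar> \<le> M + N" by linarith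
  qed
qed

lemma bnd_scale: "bnd x \<Longrightarrow> bnd (\<lambda>\<eta>. c * x \<eta>)"
  unfolding bnd_def
proof (elim exE)
  fix M assume "\<forall>\<eta>. \<bar>x \<eta>\<bar> \<le> M"
  then show "\<exists>M. \<forall>\<eta>. \<bar>c * x \<eta>\<bar> \<le> M"
    by (intro exI[of _ "\<bar>c\<bar>*M"] allI) (simp add: abs_mult mult_left_mono)
qed

lemma bnd_sum: "finite F \<Longrightarrow> (\<And>\<delta>. \<delta> \<in> F \<Longrightarrow> bnd (f \<delta>)) \<Longrightarrow> bnd (\<lambda>\<eta>. \<Sum>\<delta>\<in>F. f \<delta> \<eta>)"
proof (induction F rule: finite_induct)
  case empty then show ?case by (auto simp: bnd_def)
next
  case (insert a F)
  then show ?case using bnd_add[of "f a" "\<lambda>\<eta>. \<Sum>\<delta>\<in>F. f \<delta> \<eta>"] by simp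
qed

locale gen =
  fixes G :: "nat \<Rightarrow> 'a set" and I :: "nat \<Rightarrow> ('a \<Rightarrow> real) \<Rightarrow> ('a \<Rightarrow> real)"
  assumes dB: "\<And>\<delta>. \<delta> \<in> BD_Gamma G \<Longrightarrow> bnd (BD_d G I \<delta>)"
begin

abbreviation "S \<equiv> BD_space G I"
abbreviation "d \<equiv> BD_d G I"

lemma span_bnd: "x \<in> BD_span G I \<Longrightarrow> bnd x"
  unfolding BD_span_def
  using bnd_sum bnd_scale dB by fastforce

lemma span_obtain:
  assumes "y \<in> BD_span G I"
  shows "\<exists>F c. finite F \<and> F \<subseteq> BD_Gamma G \<and> y = (\<lambda>\<eta>. \<Sum>\<delta>\<in>F. c \<delta> * d \<delta> \<eta>)"
  using assms unfolding BD_span_def by blast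

lemma span_add:
  assumes "x \<in> BD_span G I" "y \<in> BD_span G I"
  shows "(\<lambda>\<eta>. x \<eta> + y \<eta>) \<in> BD_span G I"
proof -
  obtain F c where F: "finite F" "F \<subseteq> BD_Gamma G" and x: "x = (\<lambda>\<eta>. \<Sum>\<delta>\<in>F. c \<delta> * d \<delta> \<eta>)"
    using assms(1) unfolding BD_span_def by blast
  obtain F' c' where F': "finite F'" "F' \<subseteq> BD_Gamma G" and y: "y = (\<lambda>\<eta>. \<Sum>\<delta>\<in>F'. c' \<delta> * d \<delta> \<eta>)"
    using assms(2) unfolding BD_span_def by blast
  define e where "e \<delta> = (if \<delta> \<in> F then c \<delta> else 0) + (if \<delta> \<in> F' then c' \<delta> else 0)" for \<delta>
  have "(\<lambda>\<eta>. x \<eta> + y \<eta>) = (\<lambda>\<eta>. \<Sum>\<delta>\<in>F \<union> F'. e \<delta> * d \<delta> \<eta>)"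
  proof
    fix \<eta>
    have 1: "(\<Sum>\<delta>\<in>F. c \<delta> * d \<delta> \<eta>) = (\<Sum>\<delta>\<in>F \<union> F'. (if \<delta> \<in> F then c \<delta> else 0) * d \<delta> \<eta>)"
      using F F' by (intro sum.mono_neutral_cong_left) auto
    have 2: "(\<Sum>\<delta>\<in>F'. c' \<delta> * d \<delta> \<eta>) = (\<Sum>\<delta>\<in>F \<union> F'. (if \<delta> \<in> F' then c' \<delta> else 0) * d \<delta> \<eta>)"
      using F F' by (intro sum.mono_neutral_cong_left) auto
    show "x \<eta> + y \<eta> = (\<Sum>\<delta>\<in>F \<union> F'. e \<delta> * d \<delta> \<eta>)"
      unfolding x y 1 2 e_def by (simp add: sum.distrib ring_distribs)
  qed
  then show ?thesis unfolding BD_span_def using F F' by blast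
qed

lemma span_scale:
  assumes "x \<in> BD_span G I"
  shows "(\<lambda>\<eta>. a * x \<eta>) \<in> BD_span G I"
proof -
  obtain F c where F: "finite F" "F \<subseteq> BD_Gamma G" and x: "x = (\<lambda>\<eta>. \<Sum>\<delta>\<in>F. c \<delta> * d \<delta> \<eta>)"
    using assms(1) unfolding BD_span_def by blast
  have "(\<lambda>\<eta>. a * x \<eta>) = (\<lambda>\<eta>. \<Sum>\<delta>\<in>F. (a * c \<delta>) * d \<delta> \<eta>)"
    unfolding x by (simp add: sum_distrib_left mult.assoc)
  then show ?thesis unfolding BD_span_def
    by (intro CollectI exI[of _ F] exI[of _ "\<lambda>\<delta>. a * c \<delta>"]) (use F in auto)
qed

lemma span_space: "x \<in> BD_span G I \<Longrightarrow> x \<in> S"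
  unfolding BD_space_def by force

lemma d_span: "\<delta> \<in> BD_Gamma G \<Longrightarrow> d \<delta> \<in> BD_span G I"
  unfolding BD_span_def
  by (rule CollectI, rule exI[of _ "{\<delta>}"], rule exI[of _ "\<lambda>_. 1"]) auto

lemma d_space: "\<delta> \<in> BD_Gamma G \<Longrightarrow> d \<delta> \<in> S"
  using d_span span_space by blast

lemma space_bnd: "x \<in> S \<Longrightarrow> bnd x"
proof -
  assume "x \<in> S"
  then have h: "\<forall>\<epsilon>>0. \<exists>y\<in>BD_span G I. \<forall>\<eta>. \<bar>x \<eta> - y \<eta>\<bar> \<le> \<epsilon>" unfolding BD_space_def by simp
  obtain y where y: "y \<in> BD_span G I" "\<forall>\<eta>. \<bar>x \<eta> - y \<eta>\<bar> \<le> 1"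
  proof -
    have "(1::real) > 0" by simp
    from h[rule_format, OF this] show ?thesis using that by blast
  qed
  then obtain M where "\<forall>\<eta>. \<bar>y \<eta>\<bar> \<le> M" using span_bnd bnd_def by blast
  then show "bnd x" unfolding bnd_def using y(2)
  proof (intro exI[of _ "M+1"] allI)
    fix \<eta> have "\<bar>y \<eta>\<bar> \<le> M" "\<bar>x \<eta> - y \<eta>\<bar> \<le> 1" using \<open>\<forall>\<eta>. \<bar>y \<eta>\<bar> \<le> M\<close> y(2) by auto
    then show "\<bar>x \<eta>\<bar> \<le> M + 1" by linarith
  qed
qed

lemma space_add:
  assumes "x \<in> S" "y \<in> S"
  shows "(\<lambda>\<eta>. x \<eta> + y \<eta>) \<in> S"
  unfolding BD_space_def
proof (intro CollectI allI impI)
  fix e :: real assume e: "e > 0"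
  obtain x' where x': "x' \<in> BD_span G I" "\<forall>\<eta>. \<bar>x \<eta> - x' \<eta>\<bar> \<le> e/2"
  proof -
    have e2: "e/2 > 0" using e by simp
    have h: "\<forall>\<epsilon>>0. \<exists>y\<in>BD_span G I. \<forall>\<eta>. \<bar>x \<eta> - y \<eta>\<bar> \<le> \<epsilon>" using assms(1) unfolding BD_space_def by simp
    show ?thesis using h[rule_format, OF e2] that by blast
  qed
  obtain y' where y': "y' \<in> BD_span G I" "\<forall>\<eta>. \<bar>y \<eta> - y' \<eta>\<bar> \<le> e/2"
  proof -
    have e2: "e/2 > 0" using e by simp
    have h: "\<forall>\<epsilon>>0. \<exists>y'\<in>BD_span G I. \<forall>\<eta>. \<bar>y \<eta> - y' \<eta>\<bar> \<le> \<epsilon>" using assms(2) unfolding BD_space_def by simp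
    show ?thesis using h[rule_format, OF e2] that by blast
  qed
  show "\<exists>z\<in>BD_span G I. \<forall>\<eta>. \<bar>x \<eta> + y \<eta> - z \<eta>\<bar> \<le> e"
  proof (intro bexI[of _ "\<lambda>\<eta>. x' \<eta> + y' \<eta>"] allI)
    fix \<eta> have "\<bar>x \<eta> - x' \<eta>\<bar> \<le> e/2" "\<bar>y \<eta> - y' \<eta>\<bar> \<le> e/2" using x' y' by auto
    then show "\<bar>x \<eta> + y \<eta> - (x' \<eta> + y' \<eta>)\<bar> \<le> e" by linarith
  qed (rule span_add[OF x'(1) y'(1)])
qed

lemma space_scale:
  assumes "x \<in> S"
  shows "(\<lambda>\<eta>. a * x \<eta>) \<in> S"
  unfolding BD_space_def
proof (intro CollectI allI impI)
  fix e :: real assume e: "e > 0"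
  obtain x' where x': "x' \<in> BD_span G I" "\<forall>\<eta>. \<bar>x \<eta> - x' \<eta>\<bar> \<le> e/(\<bar>a\<bar>+1)"
  proof -
    have "e/(\<bar>a\<bar>+1) > 0" using e by (simp add: add_pos_nonneg)
    moreover have h: "\<forall>\<epsilon>>0. \<exists>y\<in>BD_span G I. \<forall>\<eta>. \<bar>x \<eta> - y \<eta>\<bar> \<le> \<epsilon>" using assms(1) unfolding BD_space_def by simp
    ultimately show ?thesis using that by blast
  qed
  have "\<bar>a * x \<eta> - a * x' \<eta>\<bar> \<le> e" for \<eta>
  proof -
    have "\<bar>a * x \<eta> - a * x' \<eta>\<bar> = \<bar>a\<bar> * \<bar>x \<eta> - x' \<eta>\<bar>"
      by (simp add: abs_mult[symmetric] right_diff_distrib)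
    also have "\<dots> \<le> (\<bar>a\<bar>+1) * (e/(\<bar>a\<bar>+1))"
      using x'(2) by (intro mult_mono) auto
    also have "\<dots> = e" by simp
    finally show ?thesis .
  qed
  moreover have "(\<lambda>\<eta>. a * x' \<eta>) \<in> BD_span G I" by (rule span_scale[OF x'(1)])
  ultimately show "\<exists>z\<in>BD_span G I. \<forall>\<eta>. \<bar>a * x \<eta> - z \<eta>\<bar> \<le> e"
    by (intro bexI[of _ "\<lambda>\<eta>. a * x' \<eta>"]) auto
qed

lemma space_diff:
  assumes "x \<in> S" "y \<in> S"
  shows "(\<lambda>\<eta>. x \<eta> - y \<eta>) \<in> S"
  using space_add[OF assms(1) space_scale[OF assms(2), of "-1"]] by simp

lemma zero_span: "(\<lambda>_. 0) \<in> BD_span G I"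
  unfolding BD_span_def
  by (rule CollectI, rule exI[of _ "{}"], rule exI[of _ "\<lambda>_. 0"]) simp

lemma space_zero: "(\<lambda>_. 0) \<in> S"
  by (rule span_space[OF zero_span])

lemma lin_zero:
  assumes "\<forall>x\<in>S. \<forall>c. f (\<lambda>\<eta>. c * x \<eta>) = c * f x"
  shows "f (\<lambda>_. 0) = 0"
proof -
  have "f (\<lambda>\<eta>. 0 * (\<lambda>_. 0) \<eta>) = 0 * f (\<lambda>_. 0)" using assms[rule_format, OF space_zero, of 0] .
  then show ?thesis by simp
qed

lemma sum_span: "finite F \<Longrightarrow> F \<subseteq> BD_Gamma G \<Longrightarrow> (\<lambda>\<eta>. \<Sum>\<delta>\<in>F. c \<delta> * d \<delta> \<eta>) \<in> BD_span G I"
  unfolding BD_span_def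
  by (rule CollectI, rule exI[of _ F], rule exI[of _ c]) simp

lemma lin_sum:
  assumes add: "\<forall>x\<in>S. \<forall>y\<in>S. f (\<lambda>\<eta>. x \<eta> + y \<eta>) = f x + f y"
    and sc: "\<forall>x\<in>S. \<forall>c. f (\<lambda>\<eta>. c * x \<eta>) = c * f x"
    and F: "finite F" "F \<subseteq> BD_Gamma G"
  shows "f (\<lambda>\<eta>. \<Sum>\<delta>\<in>F. c \<delta> * d \<delta> \<eta>) = (\<Sum>\<delta>\<in>F. c \<delta> * f (d \<delta>))"
  using F
proof (induction F rule: finite_induct)
  case empty then show ?case using lin_zero[OF sc] by simp
next
  case (insert a F)
  have a: "a \<in> BD_Gamma G" using insert.prems by simp
  have FG: "F \<subseteq> BD_Gamma G" using insert.prems by simp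
  have s1: "(\<lambda>\<eta>. c a * d a \<eta>) \<in> S" by (rule space_scale[OF d_space[OF a]])
  have s2: "(\<lambda>\<eta>. \<Sum>\<delta>\<in>F. c \<delta> * d \<delta> \<eta>) \<in> S"
    by (rule span_space[OF sum_span[OF insert.hyps(1) FG]])
  have "f (\<lambda>\<eta>. \<Sum>\<delta>\<in>insert a F. c \<delta> * d \<delta> \<eta>) =
        f (\<lambda>\<eta>. c a * d a \<eta> + (\<Sum>\<delta>\<in>F. c \<delta> * d \<delta> \<eta>))"
    using insert.hyps by simp
  also have "\<dots> = f (\<lambda>\<eta>. c a * d a \<eta>) + f (\<lambda>\<eta>. \<Sum>\<delta>\<in>F. c \<delta> * d \<delta> \<eta>)"
    using add[rule_format, OF s1 s2] by simp
  also have "f (\<lambda>\<eta>. c a * d a \<eta>) = c a * f (d a)"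
    using sc[rule_format, OF d_space[OF a], of "c a"] by simp
  also have "f (\<lambda>\<eta>. \<Sum>\<delta>\<in>F. c \<delta> * d \<delta> \<eta>) = (\<Sum>\<delta>\<in>F. c \<delta> * f (d \<delta>))"
    by (rule insert.IH[OF FG])
  finally show ?case using insert.hyps by simp
qed

lemma small_zero:
  fixes a K :: real
  assumes "\<And>e. e > 0 \<Longrightarrow> \<bar>a\<bar> \<le> K * e" "K \<ge> 0"
  shows "a = 0"
proof (rule ccontr)
  assume "a \<noteq> 0"
  then have "\<bar>a\<bar> / (2*(K+1)) > 0" using assms(2) by auto
  from assms(1)[OF this] have "\<bar>a\<bar> \<le> K * (\<bar>a\<bar> / (2*(K+1)))" .
  moreover have "K * (\<bar>a\<bar> / (2*(K+1))) < \<bar>a\<bar>"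
  proof -
    have "K * (\<bar>a\<bar> / (2*(K+1))) \<le> (K+1) * (\<bar>a\<bar> / (2*(K+1)))"
      using \<open>\<bar>a\<bar> / (2*(K+1)) > 0\<close> by (intro mult_right_mono) auto
    also have "\<dots> = \<bar>a\<bar> / 2" using assms(2) by (simp add: divide_simps)
    also have "\<dots> < \<bar>a\<bar>" using \<open>a \<noteq> 0\<close> by simp
    finally show ?thesis .
  qed
  ultimately show False by linarith
qed

lemma func_unique:
  assumes addf: "\<forall>x\<in>S. \<forall>y\<in>S. f (\<lambda>\<eta>. x \<eta> + y \<eta>) = f x + f y"
    and scf: "\<forall>x\<in>S. \<forall>c. f (\<lambda>\<eta>. c * x \<eta>) = c * f x"
    and bf: "\<exists>C. \<forall>x\<in>S. \<bar>f x\<bar> \<le> C * supn x"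
    and addg: "\<forall>x\<in>S. \<forall>y\<in>S. g (\<lambda>\<eta>. x \<eta> + y \<eta>) = g x + g y"
    and scg: "\<forall>x\<in>S. \<forall>c. g (\<lambda>\<eta>. c * x \<eta>) = c * g x"
    and bg: "\<exists>C. \<forall>x\<in>S. \<bar>g x\<bar> \<le> C * supn x"
    and agree: "\<forall>\<delta>\<in>BD_Gamma G. f (d \<delta>) = g (d \<delta>)"
    and x: "x \<in> S"
  shows "f x = g x"
proof -
  obtain Cf where Cf: "\<forall>x\<in>S. \<bar>f x\<bar> \<le> Cf * supn x" using bf by blast
  obtain Cg where Cg: "\<forall>x\<in>S. \<bar>g x\<bar> \<le> Cg * supn x" using bg by blast
  have spanagree: "f y = g y" if ys: "y \<in> BD_span G I" for y
  proof -
    obtain F c where F: "finite F" "F \<subseteq> BD_Gamma G" and y: "y = (\<lambda>\<eta>. \<Sum>\<delta>\<in>F. c \<delta> * d \<delta> \<eta>)"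
      using span_obtain[OF ys] by blast
    have e: "\<And>\<delta>. \<delta> \<in> F \<Longrightarrow> c \<delta> * f (d \<delta>) = c \<delta> * g (d \<delta>)" using agree F(2) by auto
    then have "(\<Sum>\<delta>\<in>F. c \<delta> * f (d \<delta>)) = (\<Sum>\<delta>\<in>F. c \<delta> * g (d \<delta>))" by (rule sum.cong[OF refl])
    then show ?thesis unfolding y lin_sum[OF addf scf F] lin_sum[OF addg scg F] .
  qed
  have "\<bar>f x - g x\<bar> \<le> (max Cf 0 + max Cg 0) * e" if e: "e > 0" for e
  proof -
    have h: "\<forall>\<epsilon>>0. \<exists>y\<in>BD_span G I. \<forall>\<eta>. \<bar>x \<eta> - y \<eta>\<bar> \<le> \<epsilon>" using x unfolding BD_space_def by simp
    obtain y where y: "y \<in> BD_span G I" "\<forall>\<eta>. \<bar>x \<eta> - y \<eta>\<bar> \<le> e"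
      using h[rule_format, OF e] by blast
    define z where "z = (\<lambda>\<eta>. x \<eta> - y \<eta>)"
    have yS: "y \<in> S" using y span_space by blast
    have zS: "z \<in> S" unfolding z_def using space_diff[OF x yS] .
    have xz: "x = (\<lambda>\<eta>. z \<eta> + y \<eta>)" unfolding z_def by simp
    have "f (\<lambda>\<eta>. z \<eta> + y \<eta>) = f z + f y" using addf[rule_format, OF zS yS] .
    then have fx: "f x = f z + f y" using xz by simp
    have "g (\<lambda>\<eta>. z \<eta> + y \<eta>) = g z + g y" using addg[rule_format, OF zS yS] .
    then have gx: "g x = g z + g y" using xz by simp
    have "\<bar>z \<eta>\<bar> \<le> e" for \<eta> unfolding z_def using y(2) by blast
    then have sz1: "supn z \<le> e" by (rule supn_le)
    have sz2: "0 \<le> supn z" by (rule supn_nonneg[OF space_bnd[OF zS]])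
    note sz = sz1 sz2
    have "\<bar>f z\<bar> \<le> max Cf 0 * e"
    proof -
      have "\<bar>f z\<bar> \<le> Cf * supn z" using Cf zS by blast
      also have "\<dots> \<le> max Cf 0 * supn z" using sz by (intro mult_right_mono) auto
      also have "\<dots> \<le> max Cf 0 * e" using sz by (intro mult_left_mono) auto
      finally show ?thesis .
    qed
    moreover have "\<bar>g z\<bar> \<le> max Cg 0 * e"
    proof -
      have "\<bar>g z\<bar> \<le> Cg * supn z" using Cg zS by blast
      also have "\<dots> \<le> max Cg 0 * supn z" using sz by (intro mult_right_mono) auto
      also have "\<dots> \<le> max Cg 0 * e" using sz by (intro mult_left_mono) auto
      finally show ?thesis .
    qed
    moreover have "f x - g x = f z - g z" using fx gx spanagree[OF y(1)] by simp
    ultimately have "\<bar>f x - g x\<bar> \<le> max Cf 0 * e + max Cg 0 * e" by linarith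
    then show ?thesis by (simp add: distrib_right)
  qed
  then have "f x - g x = 0" by (rule small_zero[of _ "max Cf 0 + max Cg 0"]) (auto intro: add_nonneg_nonneg)
  then show ?thesis by simp
qed

lemma dstar_eq:
  assumes "dpred G I \<gamma> f"
  shows "BD_dstar G I \<gamma> = f"
  unfolding dstar_THE
proof (rule the_equality, rule assms)
  fix g assume g: "dpred G I \<gamma> g"
  show "g = f"
  proof
    fix x show "g x = f x"
    proof (cases "x \<in> S")
      case True
      note gall = g[unfolded dpred_def]
      note g1 = gall[THEN conjunct1]
      note g2 = gall[THEN conjunct2, THEN conjunct1]
      note g3 = gall[THEN conjunct2, THEN conjunct2, THEN conjunct1]
      note g4 = gall[THEN conjunct2, THEN conjunct2, THEN conjunct2, THEN conjunct1]
      note fall = assms[unfolded dpred_def]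
      note f1 = fall[THEN conjunct1]
      note f2 = fall[THEN conjunct2, THEN conjunct1]
      note f3 = fall[THEN conjunct2, THEN conjunct2, THEN conjunct1]
      note f4 = fall[THEN conjunct2, THEN conjunct2, THEN conjunct2, THEN conjunct1]
      have ag: "\<forall>\<delta>\<in>BD_Gamma G. g (d \<delta>) = f (d \<delta>)" using g4 f4 by simp
      show ?thesis by (rule func_unique[OF g1 g2 g3 f1 f2 f3 ag True])
    next
      case False
      note gz = g[unfolded dpred_def, THEN conjunct2, THEN conjunct2, THEN conjunct2, THEN conjunct2]
      note fz = assms[unfolded dpred_def, THEN conjunct2, THEN conjunct2, THEN conjunct2, THEN conjunct2]
      show ?thesis using gz[rule_format, OF False] fz[rule_format, OF False] by simp
    qed
  qed
qed

lemma proj_eq: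
  assumes "ppred G I E P"
  shows "BD_proj G I E = P"
  unfolding proj_THE
proof (rule the_equality, rule assms)
  fix Q assume g: "ppred G I E Q"
  show "Q = P"
  proof
    fix x show "Q x = P x"
    proof (cases "x \<in> S")
      case True
      show ?thesis
      proof
        fix \<eta>
        note qa = g[unfolded ppred_def]
        note pa = assms[unfolded ppred_def]
        obtain C1 where C1: "\<forall>x\<in>S. \<forall>\<eta>. \<bar>Q x \<eta>\<bar> \<le> C1 * supn x"
          using qa[THEN conjunct2, THEN conjunct2, THEN conjunct2, THEN conjunct1] by blast
        obtain C2 where C2: "\<forall>x\<in>S. \<forall>\<eta>. \<bar>P x \<eta>\<bar> \<le> C2 * supn x"
          using pa[THEN conjunct2, THEN conjunct2, THEN conjunct2, THEN conjunct1] by blast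
        have a1: "\<forall>x\<in>S. \<forall>y\<in>S. Q (\<lambda>\<eta>. x \<eta> + y \<eta>) \<eta> = Q x \<eta> + Q y \<eta>"
          using qa[THEN conjunct2, THEN conjunct1] by simp
        have a2: "\<forall>x\<in>S. \<forall>y\<in>S. P (\<lambda>\<eta>. x \<eta> + y \<eta>) \<eta> = P x \<eta> + P y \<eta>"
          using pa[THEN conjunct2, THEN conjunct1] by simp
        have s1: "\<forall>x\<in>S. \<forall>c. Q (\<lambda>\<eta>. c * x \<eta>) \<eta> = c * Q x \<eta>"
          using qa[THEN conjunct2, THEN conjunct2, THEN conjunct1] by simp
        have s2: "\<forall>x\<in>S. \<forall>c. P (\<lambda>\<eta>. c * x \<eta>) \<eta> = c * P x \<eta>"
          using pa[THEN conjunct2, THEN conjunct2, THEN conjunct1] by simp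
        have ag: "\<forall>\<delta>\<in>BD_Gamma G. Q (d \<delta>) \<eta> = P (d \<delta>) \<eta>"
          using qa[THEN conjunct2, THEN conjunct2, THEN conjunct2, THEN conjunct2, THEN conjunct1]
            pa[THEN conjunct2, THEN conjunct2, THEN conjunct2, THEN conjunct2, THEN conjunct1] by simp
        have b1: "\<exists>C. \<forall>x\<in>S. \<bar>Q x \<eta>\<bar> \<le> C * supn x" using C1 by blast
        have b2: "\<exists>C. \<forall>x\<in>S. \<bar>P x \<eta>\<bar> \<le> C * supn x" using C2 by blast
        show "Q x \<eta> = P x \<eta>"
          by (rule func_unique[where f="\<lambda>x. Q x \<eta>" and g="\<lambda>x. P x \<eta>", OF a1 s1 b1 a2 s2 b2 ag True])
      qed
    next
      case False
      note gz = g[unfolded ppred_def, THEN conjunct2, THEN conjunct2, THEN conjunct2, THEN conjunct2, THEN conjunct2]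
      note fz = assms[unfolded ppred_def, THEN conjunct2, THEN conjunct2, THEN conjunct2, THEN conjunct2, THEN conjunct2]
      show ?thesis using gz[rule_format, OF False] fz[rule_format, OF False] by simp
    qed
  qed
qed


lemma proj_fin:
  assumes dex: "\<forall>\<delta>\<in>BD_Gamma G. dpred G I \<delta> (BD_dstar G I \<delta>)"
    and finD: "finite {\<delta>\<in>BD_Gamma G. BD_level G \<delta> \<in> E}"
  shows "ppred G I E (\<lambda>x. if x \<in> S then (\<lambda>\<eta>. \<Sum>\<delta>\<in>{\<delta>\<in>BD_Gamma G. BD_level G \<delta> \<in> E}. BD_dstar G I \<delta> x * d \<delta> \<eta>) else (\<lambda>_. 0))"
proof -
  define D where "D = {\<delta>\<in>BD_Gamma G. BD_level G \<delta> \<in> E}"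
  define ds where "ds = BD_dstar G I"
  have DG: "D \<subseteq> BD_Gamma G" unfolding D_def by auto
  have fD: "finite D" using finD unfolding D_def .
  have dadd: "ds \<delta> (\<lambda>\<eta>. x \<eta> + y \<eta>) = ds \<delta> x + ds \<delta> y" if "\<delta> \<in> BD_Gamma G" "x \<in> S" "y \<in> S" for \<delta> x y
    using dex[rule_format, OF that(1), unfolded dpred_def, THEN conjunct1, rule_format, OF that(2,3)] unfolding ds_def .
  have dsc: "ds \<delta> (\<lambda>\<eta>. c * x \<eta>) = c * ds \<delta> x" if "\<delta> \<in> BD_Gamma G" "x \<in> S" for \<delta> x c
    using dex[rule_format, OF that(1), unfolded dpred_def, THEN conjunct2, THEN conjunct1, rule_format, OF that(2)] unfolding ds_def .
  have dbd: "\<exists>C. \<forall>x\<in>S. \<bar>ds \<delta> x\<bar> \<le> C * supn x" if "\<delta> \<in> BD_Gamma G" for \<delta>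
    using dex[rule_format, OF that(1), unfolded dpred_def, THEN conjunct2, THEN conjunct2, THEN conjunct1] unfolding ds_def .
  have dval: "ds \<delta> (d \<delta>') = (if \<delta>' = \<delta> then 1 else 0)" if "\<delta> \<in> BD_Gamma G" "\<delta>' \<in> BD_Gamma G" for \<delta> \<delta>'
    using dex[rule_format, OF that(1), unfolded dpred_def, THEN conjunct2, THEN conjunct2, THEN conjunct2, THEN conjunct1, rule_format, OF that(2)] unfolding ds_def .
  define P where "P = (\<lambda>x. if x \<in> S then (\<lambda>\<eta>. \<Sum>\<delta>\<in>D. ds \<delta> x * d \<delta> \<eta>) else (\<lambda>_. 0))"
  have p1: "\<forall>x\<in>S. P x \<in> S"
  proof
    fix x assume "x \<in> S"
    then have "P x = (\<lambda>\<eta>. \<Sum>\<delta>\<in>D. ds \<delta> x * d \<delta> \<eta>)" unfolding P_def by simp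
    also have "\<dots> \<in> BD_span G I" by (rule sum_span[OF fD DG])
    finally show "P x \<in> S" using span_space by blast
  qed
  have p2: "\<forall>x\<in>S. \<forall>y\<in>S. P (\<lambda>\<eta>. x \<eta> + y \<eta>) = (\<lambda>\<eta>. P x \<eta> + P y \<eta>)"
  proof (intro ballI ext)
    fix x y \<eta> assume xy: "x \<in> S" "y \<in> S"
    have "P (\<lambda>\<eta>. x \<eta> + y \<eta>) \<eta> = (\<Sum>\<delta>\<in>D. ds \<delta> (\<lambda>\<eta>. x \<eta> + y \<eta>) * d \<delta> \<eta>)"
      unfolding P_def using space_add[OF xy] by simp
    also have "\<dots> = (\<Sum>\<delta>\<in>D. ds \<delta> x * d \<delta> \<eta> + ds \<delta> y * d \<delta> \<eta>)"
    proof (rule sum.cong[OF refl])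
      fix \<delta> assume "\<delta> \<in> D" then have "\<delta> \<in> BD_Gamma G" using DG by blast
      from dadd[OF this xy] show "ds \<delta> (\<lambda>\<eta>. x \<eta> + y \<eta>) * d \<delta> \<eta> = ds \<delta> x * d \<delta> \<eta> + ds \<delta> y * d \<delta> \<eta>"
        by (simp add: distrib_right)
    qed
    also have "\<dots> = P x \<eta> + P y \<eta>" unfolding P_def using xy by (simp add: sum.distrib)
    finally show "P (\<lambda>\<eta>. x \<eta> + y \<eta>) \<eta> = P x \<eta> + P y \<eta>" .
  qed
  have p3: "\<forall>x\<in>S. \<forall>c. P (\<lambda>\<eta>. c * x \<eta>) = (\<lambda>\<eta>. c * P x \<eta>)"
  proof (intro ballI allI ext)
    fix x c \<eta> assume x: "x \<in> S"
    have "P (\<lambda>\<eta>. c * x \<eta>) \<eta> = (\<Sum>\<delta>\<in>D. ds \<delta> (\<lambda>\<eta>. c * x \<eta>) * d \<delta> \<eta>)"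
      unfolding P_def using space_scale[OF x] by simp
    also have "\<dots> = (\<Sum>\<delta>\<in>D. c * (ds \<delta> x * d \<delta> \<eta>))"
    proof (rule sum.cong[OF refl])
      fix \<delta> assume "\<delta> \<in> D" then have "\<delta> \<in> BD_Gamma G" using DG by blast
      from dsc[OF this x] show "ds \<delta> (\<lambda>\<eta>. c * x \<eta>) * d \<delta> \<eta> = c * (ds \<delta> x * d \<delta> \<eta>)"
        by simp
    qed
    also have "\<dots> = c * P x \<eta>" unfolding P_def using x by (simp add: sum_distrib_left)
    finally show "P (\<lambda>\<eta>. c * x \<eta>) \<eta> = c * P x \<eta>" .
  qed
  have p4: "\<exists>C. \<forall>x\<in>S. \<forall>\<eta>. \<bar>P x \<eta>\<bar> \<le> C * supn x"
  proof -
    have "\<forall>\<delta>\<in>BD_Gamma G. \<exists>C. \<forall>x\<in>S. \<bar>ds \<delta> x\<bar> \<le> C * supn x" using dbd by blast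
    then obtain Cf where Cf: "\<forall>\<delta>\<in>BD_Gamma G. \<forall>x\<in>S. \<bar>ds \<delta> x\<bar> \<le> Cf \<delta> * supn x"
      by (rule bchoice[THEN exE])
    have "\<forall>\<delta>\<in>BD_Gamma G. \<exists>M. \<forall>\<eta>. \<bar>d \<delta> \<eta>\<bar> \<le> M" using dB unfolding bnd_def by blast
    then obtain Mf where Mf: "\<forall>\<delta>\<in>BD_Gamma G. \<forall>\<eta>. \<bar>d \<delta> \<eta>\<bar> \<le> Mf \<delta>"
      by (rule bchoice[THEN exE])
    show ?thesis
    proof (intro exI[of _ "\<Sum>\<delta>\<in>D. \<bar>Cf \<delta>\<bar> * \<bar>Mf \<delta>\<bar>"] ballI allI)
      fix x \<eta> assume x: "x \<in> S"
      have sx: "0 \<le> supn x" using supn_nonneg[OF space_bnd[OF x]] .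
      have "\<bar>P x \<eta>\<bar> = \<bar>\<Sum>\<delta>\<in>D. ds \<delta> x * d \<delta> \<eta>\<bar>" unfolding P_def using x by simp
      also have "\<dots> \<le> (\<Sum>\<delta>\<in>D. \<bar>ds \<delta> x * d \<delta> \<eta>\<bar>)" by (rule sum_abs)
      also have "\<dots> \<le> (\<Sum>\<delta>\<in>D. (\<bar>Cf \<delta>\<bar> * \<bar>Mf \<delta>\<bar>) * supn x)"
      proof (rule sum_mono)
        fix \<delta> assume "\<delta> \<in> D"
        then have \<delta>: "\<delta> \<in> BD_Gamma G" using DG by blast
        have "\<bar>ds \<delta> x\<bar> \<le> Cf \<delta> * supn x" using Cf \<delta> x by blast
        also have "\<dots> \<le> \<bar>Cf \<delta>\<bar> * supn x" by (rule mult_right_mono[OF abs_ge_self sx])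
        finally have a: "\<bar>ds \<delta> x\<bar> \<le> \<bar>Cf \<delta>\<bar> * supn x" .
        have "\<bar>d \<delta> \<eta>\<bar> \<le> Mf \<delta>" using Mf \<delta> by blast
        then have b: "\<bar>d \<delta> \<eta>\<bar> \<le> \<bar>Mf \<delta>\<bar>" by linarith
        have c: "0 \<le> \<bar>Cf \<delta>\<bar> * supn x" using sx by simp
        have "\<bar>ds \<delta> x * d \<delta> \<eta>\<bar> = \<bar>ds \<delta> x\<bar> * \<bar>d \<delta> \<eta>\<bar>" by (rule abs_mult)
        also have "\<dots> \<le> (\<bar>Cf \<delta>\<bar> * supn x) * \<bar>Mf \<delta>\<bar>"
          by (rule mult_mono[OF a b c abs_ge_zero])
        also have "\<dots> = (\<bar>Cf \<delta>\<bar> * \<bar>Mf \<delta>\<bar>) * supn x" by (simp only: mult_ac)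
        finally show "\<bar>ds \<delta> x * d \<delta> \<eta>\<bar> \<le> (\<bar>Cf \<delta>\<bar> * \<bar>Mf \<delta>\<bar>) * supn x" .
      qed
      also have "\<dots> = (\<Sum>\<delta>\<in>D. \<bar>Cf \<delta>\<bar> * \<bar>Mf \<delta>\<bar>) * supn x" by (rule sum_distrib_right[symmetric])
      finally show "\<bar>P x \<eta>\<bar> \<le> (\<Sum>\<delta>\<in>D. \<bar>Cf \<delta>\<bar> * \<bar>Mf \<delta>\<bar>) * supn x" .
    qed
  qed
  have p5: "\<forall>\<delta>\<in>BD_Gamma G. P (d \<delta>) = (if BD_level G \<delta> \<in> E then d \<delta> else (\<lambda>_. 0))"
  proof (intro ballI ext)
    fix \<delta>0 \<eta> assume \<delta>0: "\<delta>0 \<in> BD_Gamma G"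
    have "P (d \<delta>0) \<eta> = (\<Sum>\<delta>\<in>D. ds \<delta> (d \<delta>0) * d \<delta> \<eta>)" unfolding P_def using d_space[OF \<delta>0] by simp
    also have "\<dots> = (\<Sum>\<delta>\<in>D. (if \<delta> = \<delta>0 then d \<delta>0 \<eta> else 0))"
    proof (rule sum.cong[OF refl])
      fix \<delta> assume "\<delta> \<in> D" then have "\<delta> \<in> BD_Gamma G" using DG by blast
      from dval[OF this \<delta>0] show "ds \<delta> (d \<delta>0) * d \<delta> \<eta> = (if \<delta> = \<delta>0 then d \<delta>0 \<eta> else 0)"
        by auto
    qed
    also have "\<dots> = (if \<delta>0 \<in> D then d \<delta>0 \<eta> else 0)" using fD by (simp add: sum.delta')
    also have "\<dots> = (if BD_level G \<delta>0 \<in> E then d \<delta>0 else (\<lambda>_. 0)) \<eta>" unfolding D_def using \<delta>0 by simp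
    finally show "P (d \<delta>0) \<eta> = (if BD_level G \<delta>0 \<in> E then d \<delta>0 else (\<lambda>_. 0)) \<eta>" .
  qed
  have p6: "\<forall>x. x \<notin> S \<longrightarrow> P x = (\<lambda>_. 0)" unfolding P_def by simp
  have "ppred G I E P" unfolding ppred_def by (intro conjI p1 p2 p3 p4 p5 p6)
  then show ?thesis unfolding P_def D_def ds_def .
qed

lemma proj_cofin:
  assumes dex: "\<forall>\<delta>\<in>BD_Gamma G. dpred G I \<delta> (BD_dstar G I \<delta>)"
    and finD: "finite {\<delta>\<in>BD_Gamma G. BD_level G \<delta> \<in> - E}"
  shows "\<exists>P. ppred G I E P"
proof -
  obtain Q where Q: "ppred G I (- E) Q" using proj_fin[OF dex finD] by blast
  note qa = Q[unfolded ppred_def]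
  have q1: "\<forall>x\<in>S. Q x \<in> S" using qa[THEN conjunct1] .
  have q2: "\<forall>x\<in>S. \<forall>y\<in>S. Q (\<lambda>\<eta>. x \<eta> + y \<eta>) = (\<lambda>\<eta>. Q x \<eta> + Q y \<eta>)" using qa[THEN conjunct2, THEN conjunct1] .
  have q3: "\<forall>x\<in>S. \<forall>c. Q (\<lambda>\<eta>. c * x \<eta>) = (\<lambda>\<eta>. c * Q x \<eta>)" using qa[THEN conjunct2, THEN conjunct2, THEN conjunct1] .
  obtain C where q4: "\<forall>x\<in>S. \<forall>\<eta>. \<bar>Q x \<eta>\<bar> \<le> C * supn x"
    using qa[THEN conjunct2, THEN conjunct2, THEN conjunct2, THEN conjunct1] by blast
  have q5: "\<forall>\<delta>\<in>BD_Gamma G. Q (d \<delta>) = (if BD_level G \<delta> \<in> - E then d \<delta> else (\<lambda>_. 0))"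
    using qa[THEN conjunct2, THEN conjunct2, THEN conjunct2, THEN conjunct2, THEN conjunct1] .
  define P where "P = (\<lambda>x. if x \<in> S then (\<lambda>\<eta>. x \<eta> - Q x \<eta>) else (\<lambda>_. 0))"
  have p1: "\<forall>x\<in>S. P x \<in> S" unfolding P_def using q1 space_diff by simp
  have p2: "\<forall>x\<in>S. \<forall>y\<in>S. P (\<lambda>\<eta>. x \<eta> + y \<eta>) = (\<lambda>\<eta>. P x \<eta> + P y \<eta>)"
  proof (intro ballI ext)
    fix x y \<eta> assume xy: "x \<in> S" "y \<in> S"
    have "Q (\<lambda>\<eta>. x \<eta> + y \<eta>) \<eta> = Q x \<eta> + Q y \<eta>" using q2[rule_format, OF xy] by simp
    then show "P (\<lambda>\<eta>. x \<eta> + y \<eta>) \<eta> = P x \<eta> + P y \<eta>"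
      unfolding P_def using xy space_add[OF xy] by simp
  qed
  have p3: "\<forall>x\<in>S. \<forall>c. P (\<lambda>\<eta>. c * x \<eta>) = (\<lambda>\<eta>. c * P x \<eta>)"
  proof (intro ballI allI ext)
    fix x c \<eta> assume x: "x \<in> S"
    have "Q (\<lambda>\<eta>. c * x \<eta>) \<eta> = c * Q x \<eta>" using q3[rule_format, OF x] by simp
    then show "P (\<lambda>\<eta>. c * x \<eta>) \<eta> = c * P x \<eta>"
      unfolding P_def using x space_scale[OF x] by (simp add: right_diff_distrib)
  qed
  have p4: "\<exists>C. \<forall>x\<in>S. \<forall>\<eta>. \<bar>P x \<eta>\<bar> \<le> C * supn x"
  proof (intro exI[of _ "1 + C"] ballI allI)
    fix x \<eta> assume x: "x \<in> S"
    have a: "\<bar>x \<eta>\<bar> \<le> supn x" using supn_ge[OF space_bnd[OF x]] .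
    have b: "\<bar>Q x \<eta>\<bar> \<le> C * supn x" using q4 x by blast
    have "\<bar>P x \<eta>\<bar> = \<bar>x \<eta> - Q x \<eta>\<bar>" unfolding P_def using x by simp
    also have "\<dots> \<le> supn x + C * supn x" using a b by linarith
    finally show "\<bar>P x \<eta>\<bar> \<le> (1 + C) * supn x" by (simp add: distrib_right)
  qed
  have p5: "\<forall>\<delta>\<in>BD_Gamma G. P (d \<delta>) = (if BD_level G \<delta> \<in> E then d \<delta> else (\<lambda>_. 0))"
  proof (intro ballI ext)
    fix \<delta> \<eta> assume \<delta>: "\<delta> \<in> BD_Gamma G"
    show "P (d \<delta>) \<eta> = (if BD_level G \<delta> \<in> E then d \<delta> else (\<lambda>_. 0)) \<eta>"
      unfolding P_def using d_space[OF \<delta>] q5 \<delta> by auto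
  qed
  have p6: "\<forall>x. x \<notin> S \<longrightarrow> P x = (\<lambda>_. 0)" unfolding P_def by simp
  have "ppred G I E P" unfolding ppred_def by (intro conjI p1 p2 p3 p4 p5 p6)
  then show ?thesis by blast
qed

end



lemma restr_add: "restr A (\<lambda>\<eta>. x \<eta> + y \<eta>) = (\<lambda>\<eta>. restr A x \<eta> + restr A y \<eta>)"
  by (simp add: restr_def fun_eq_iff)

lemma restr_scale: "restr A (\<lambda>\<eta>. c * x \<eta>) = (\<lambda>\<eta>. c * restr A x \<eta>)"
  by (simp add: restr_def fun_eq_iff)

lemma supp_restr: "supported A (restr A x)"
  by (simp add: supported_def restr_def)

definition ee :: "'a \<Rightarrow> 'a \<Rightarrow> real" where "ee \<delta> = (\<lambda>\<eta>. if \<eta> = \<delta> then 1 else 0)"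

lemma d_ee: "BD_d G I \<delta> = I (BD_level G \<delta>) (ee \<delta>)"
  unfolding BD_d_def ee_def ..

lemma supp_ee: "\<delta> \<in> A \<Longrightarrow> supported A (ee \<delta>)"
  unfolding supported_def ee_def by auto

lemma lvl_in: "\<delta> \<in> BD_Gamma G \<Longrightarrow> \<delta> \<in> G (BD_level G \<delta>)"
  unfolding BD_level_def BD_Gamma_def by (rule LeastI_ex) blast

lemma lvl_le: "\<delta> \<in> G q \<Longrightarrow> BD_level G \<delta> \<le> q"
  unfolding BD_level_def by (rule Least_le)

lemma G_Gamma: "\<delta> \<in> G q \<Longrightarrow> \<delta> \<in> BD_Gamma G"
  unfolding BD_Gamma_def by blast

lemma levels_fin:
  assumes "\<And>q. finite (G q)" "finite E"
  shows "finite {\<delta>\<in>BD_Gamma G. BD_level G \<delta> \<in> E}"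
proof (rule finite_subset)
  show "{\<delta>\<in>BD_Gamma G. BD_level G \<delta> \<in> E} \<subseteq> (\<Union>q\<in>E. G q)"
  proof
    fix \<delta> assume "\<delta> \<in> {\<delta>\<in>BD_Gamma G. BD_level G \<delta> \<in> E}"
    then have a: "\<delta> \<in> BD_Gamma G" and b: "BD_level G \<delta> \<in> E" by simp_all
    show "\<delta> \<in> (\<Union>q\<in>E. G q)" by (rule UN_I[where B=G, OF b lvl_in[OF a]])
  qed
  show "finite (\<Union>q\<in>E. G q)" by (rule finite_UN_I[OF assms(2) assms(1)])
qed

lemma max_bd:
  fixes z :: "'a \<Rightarrow> real"
  assumes A: "finite A" "A \<noteq> {}" and b: "\<And>\<zeta>. \<zeta> \<in> A \<Longrightarrow> \<bar>z \<zeta>\<bar> \<le> B"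
  shows "C * (MAX \<zeta>\<in>A. \<bar>z \<zeta>\<bar>) \<le> max C 0 * B"
proof -
  define m where "m = (MAX \<zeta>\<in>A. \<bar>z \<zeta>\<bar>)"
  obtain a where a: "a \<in> A" using A(2) by blast
  have "\<bar>z a\<bar> \<le> m" unfolding m_def using A(1) a by simp
  then have m0: "0 \<le> m" by linarith
  have mB: "m \<le> B" unfolding m_def using A b by simp
  have "C * m \<le> max C 0 * m" using m0 by (intro mult_right_mono) auto
  also have "\<dots> \<le> max C 0 * B" using mB by (intro mult_left_mono) auto
  finally show ?thesis unfolding m_def .
qed

lemma interval_cases:
  assumes "nat_interval E"
  shows "finite E \<or> finite (- E)"
proof (cases "finite E")
  case False
  then have ne: "E \<noteq> {}" by auto
  obtain a where aE: "a \<in> E" using ne by blast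
  have "- E \<subseteq> {..<a}"
  proof
    fix n assume n: "n \<in> - E"
    show "n \<in> {..<a}"
    proof (rule ccontr)
      assume "n \<notin> {..<a}"
      then have an: "a \<le> n" by simp
      obtain c where c: "c \<in> E" "n \<le> c" using False infinite_nat_iff_unbounded_le by blast
      have "n \<in> E" using assms[unfolded nat_interval_def, rule_format, OF aE c(1) an c(2)] .
      then show False using n by simp
    qed
  qed
  then show ?thesis using finite_subset by blast
qed simp


locale bd =
  fixes G :: "nat \<Rightarrow> 'a set" and I :: "nat \<Rightarrow> ('a \<Rightarrow> real) \<Rightarrow> ('a \<Rightarrow> real)"
  assumes datum: "BD_datum G I"
begin

lemma G_props: "finite (G q) \<and> G q \<noteq> {} \<and> G q \<subset> G (Suc q)"
  using datum[unfolded BD_datum_def, THEN conjunct1, rule_format, of q] .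

lemma finG: "finite (G q)"
  using G_props[of q] by (elim conjE)
lemma neG: "G q \<noteq> {}"
  using G_props[of q] by (elim conjE)
lemma sucG: "G q \<le> G (Suc q)"
  using G_props[of q] by (elim conjE) (rule less_imp_le)

lemma monoG: "p \<le> q \<Longrightarrow> G p \<subseteq> G q"
  by (rule lift_Suc_mono_le[of G, OF sucG])

lemma Iadd: "supported (G q) x \<Longrightarrow> supported (G q) y \<Longrightarrow> I q (\<lambda>\<eta>. x \<eta> + y \<eta>) = (\<lambda>\<eta>. I q x \<eta> + I q y \<eta>)"
  using datum[unfolded BD_datum_def, THEN conjunct2, THEN conjunct2, THEN conjunct1, rule_format] .

lemma Isc: "supported (G q) x \<Longrightarrow> I q (\<lambda>\<eta>. c * x \<eta>) = (\<lambda>\<eta>. c * I q x \<eta>)"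
  using datum[unfolded BD_datum_def, THEN conjunct2, THEN conjunct2, THEN conjunct2, THEN conjunct1, rule_format] .

lemma Iid: "supported (G q) x \<Longrightarrow> \<eta> \<in> G q \<Longrightarrow> I q x \<eta> = x \<eta>"
  using datum[unfolded BD_datum_def, THEN conjunct2, THEN conjunct2, THEN conjunct2, THEN conjunct2, THEN conjunct1, rule_format] .

lemma Ibd: "\<exists>C. \<forall>q x. supported (G q) x \<longrightarrow> (\<forall>\<eta>. \<bar>I q x \<eta>\<bar> \<le> C * (MAX \<zeta>\<in>G q. \<bar>x \<zeta>\<bar>))"
  using datum[unfolded BD_datum_def, THEN conjunct2, THEN conjunct2, THEN conjunct2, THEN conjunct2, THEN conjunct2, THEN conjunct1] .

lemma Icompat: "p < q \<Longrightarrow> supported (G p) x \<Longrightarrow> I p x = I q (restr (G q) (I p x))"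
  using datum[unfolded BD_datum_def, THEN conjunct2, THEN conjunct2, THEN conjunct2, THEN conjunct2, THEN conjunct2, THEN conjunct2, rule_format] .

lemma I_zero: "I q (\<lambda>_. 0) = (\<lambda>_. 0)"
proof -
  have s: "supported (G q) (\<lambda>_. 0)" unfolding supported_def by simp
  have "I q (\<lambda>\<eta>. 0 * (\<lambda>_. 0) \<eta>) = (\<lambda>\<eta>. 0 * I q (\<lambda>_. 0) \<eta>)" by (rule Isc[OF s])
  then show ?thesis by simp
qed

lemma in_G_iff: "\<delta> \<in> BD_Gamma G \<Longrightarrow> \<delta> \<in> G q \<longleftrightarrow> BD_level G \<delta> \<le> q"
proof
  assume "\<delta> \<in> G q" then show "BD_level G \<delta> \<le> q" by (rule lvl_le)
next
  assume a: "\<delta> \<in> BD_Gamma G" and b: "BD_level G \<delta> \<le> q"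
  have "\<delta> \<in> G (BD_level G \<delta>)" by (rule lvl_in[OF a])
  then show "\<delta> \<in> G q" using monoG[OF b] by (rule subsetD[rotated])
qed

lemma d_on:
  assumes "\<delta> \<in> BD_Gamma G" "\<eta> \<in> G (BD_level G \<delta>)"
  shows "BD_d G I \<delta> \<eta> = ee \<delta> \<eta>"
  unfolding d_ee by (rule Iid[OF supp_ee[OF lvl_in[OF assms(1)]] assms(2)])

lemma d_low:
  assumes "\<delta> \<in> BD_Gamma G" "\<eta> \<in> BD_Gamma G" "BD_level G \<eta> \<le> BD_level G \<delta>"
  shows "BD_d G I \<delta> \<eta> = (if \<eta> = \<delta> then 1 else 0)"
proof -
  have "\<eta> \<in> G (BD_level G \<delta>)" by (subst in_G_iff[OF assms(2)]) (rule assms(3))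
  then show ?thesis using d_on[OF assms(1)] unfolding ee_def by simp
qed

lemma restr_d_eq:
  assumes "\<delta> \<in> BD_Gamma G"
  shows "restr (G (BD_level G \<delta>)) (BD_d G I \<delta>) = ee \<delta>"
proof
  fix \<eta>
  show "restr (G (BD_level G \<delta>)) (BD_d G I \<delta>) \<eta> = ee \<delta> \<eta>"
  proof (cases "\<eta> \<in> G (BD_level G \<delta>)")
    case True then show ?thesis unfolding restr_def using d_on[OF assms True] by simp
  next
    case False
    then have "\<eta> \<noteq> \<delta>" using lvl_in[OF assms] by blast
    then show ?thesis unfolding restr_def ee_def using False by simp
  qed
qed

lemma I_d_high:
  assumes "\<delta> \<in> BD_Gamma G" "BD_level G \<delta> \<le> q"
  shows "I q (restr (G q) (BD_d G I \<delta>)) = BD_d G I \<delta>"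
proof (cases "BD_level G \<delta> = q")
  case True
  then show ?thesis using restr_d_eq[OF assms(1)] unfolding d_ee by simp
next
  case False
  then have lt: "BD_level G \<delta> < q" using assms(2) by simp
  show ?thesis unfolding d_ee
    by (rule Icompat[OF lt supp_ee[OF lvl_in[OF assms(1)]], symmetric])
qed

lemma restr_d_zero:
  assumes "\<delta> \<in> BD_Gamma G" "q < BD_level G \<delta>"
  shows "restr (G q) (BD_d G I \<delta>) = (\<lambda>_. 0)"
proof
  fix \<eta>
  show "restr (G q) (BD_d G I \<delta>) \<eta> = 0"
  proof (cases "\<eta> \<in> G q")
    case True
    have \<eta>: "\<eta> \<in> BD_Gamma G" by (rule G_Gamma[where G=G, OF True])
    have "BD_level G \<eta> \<le> q" by (rule lvl_le[where G=G, OF True])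
    then have le: "BD_level G \<eta> \<le> BD_level G \<delta>" using assms(2) by simp
    have "\<delta> \<notin> G q" using in_G_iff[OF assms(1)] assms(2) by simp
    then have "\<eta> \<noteq> \<delta>" using True by blast
    then show ?thesis unfolding restr_def using True d_low[OF assms(1) \<eta> le] by simp
  qed (simp add: restr_def)
qed

lemma d_bnd: "\<delta> \<in> BD_Gamma G \<Longrightarrow> bnd (BD_d G I \<delta>)"
proof -
  assume \<delta>: "\<delta> \<in> BD_Gamma G"
  obtain C where C: "\<forall>q x. supported (G q) x \<longrightarrow> (\<forall>\<eta>. \<bar>I q x \<eta>\<bar> \<le> C * (MAX \<zeta>\<in>G q. \<bar>x \<zeta>\<bar>))"
    using Ibd by blast
  let ?q = "BD_level G \<delta>"
  have s: "supported (G ?q) (ee \<delta>)" by (rule supp_ee[OF lvl_in[OF \<delta>]])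
  have "\<bar>BD_d G I \<delta> \<eta>\<bar> \<le> max C 0 * 1" for \<eta>
  proof -
    have "\<bar>BD_d G I \<delta> \<eta>\<bar> \<le> C * (MAX \<zeta>\<in>G ?q. \<bar>ee \<delta> \<zeta>\<bar>)"
      unfolding d_ee using C s by blast
    also have "\<dots> \<le> max C 0 * 1"
      by (rule max_bd[OF finG neG]) (simp add: ee_def)
    finally show ?thesis .
  qed
  then show ?thesis unfolding bnd_def by blast
qed

sublocale gen G I
  by unfold_locales (rule d_bnd)


lemma dstar_orig:
  assumes \<gamma>: "\<gamma> \<in> BD_Gamma G"
  shows "dpred G I \<gamma> (BD_dstar G I \<gamma>)"
proof -
  define p where "p = BD_level G \<gamma> - 1"
  define h where "h x = (if BD_level G \<gamma> = 0 then 0 else I p (restr (G p) x) \<gamma>)" for x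
  define f where "f x = (if x \<in> S then x \<gamma> - h x else 0)" for x
  have hadd: "h (\<lambda>\<eta>. x \<eta> + y \<eta>) = h x + h y" for x y
    unfolding h_def restr_add Iadd[OF supp_restr supp_restr] by simp
  have hsc: "h (\<lambda>\<eta>. c * x \<eta>) = c * h x" for x c
    unfolding h_def restr_scale Isc[OF supp_restr] by simp
  obtain C where C: "\<forall>q x. supported (G q) x \<longrightarrow> (\<forall>\<eta>. \<bar>I q x \<eta>\<bar> \<le> C * (MAX \<zeta>\<in>G q. \<bar>x \<zeta>\<bar>))"
    using Ibd by blast
  have hbd: "\<bar>h x\<bar> \<le> max C 0 * supn x" if bx: "bnd x" for x
  proof (cases "BD_level G \<gamma> = 0")
    case True
    have "0 \<le> max C 0 * supn x" using supn_nonneg[OF bx] by simp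
    then show ?thesis unfolding h_def using True by simp
  next
    case False
    have "\<bar>I p (restr (G p) x) \<gamma>\<bar> \<le> C * (MAX \<zeta>\<in>G p. \<bar>restr (G p) x \<zeta>\<bar>)"
      using C supp_restr by blast
    also have "\<dots> \<le> max C 0 * supn x"
    proof (rule max_bd[OF finG neG])
      fix \<zeta> show "\<bar>restr (G p) x \<zeta>\<bar> \<le> supn x"
        using supn_ge[OF bx, of \<zeta>] supn_nonneg[OF bx] unfolding restr_def by simp
    qed
    finally show ?thesis unfolding h_def using False by simp
  qed
  have hval: "h (d \<delta>) = (if BD_level G \<delta> < BD_level G \<gamma> then d \<delta> \<gamma> else 0)"
    if \<delta>: "\<delta> \<in> BD_Gamma G" for \<delta>
  proof (cases "BD_level G \<gamma> = 0")
    case True then show ?thesis unfolding h_def by simp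
  next
    case False
    show ?thesis
    proof (cases "BD_level G \<delta> < BD_level G \<gamma>")
      case True
      then have "BD_level G \<delta> \<le> p" unfolding p_def by simp
      then have "I p (restr (G p) (d \<delta>)) = d \<delta>" by (rule I_d_high[OF \<delta>])
      then show ?thesis unfolding h_def using False True by simp
    next
      case nt: False
      then have "p < BD_level G \<delta>" unfolding p_def using False by simp
      then have "restr (G p) (d \<delta>) = (\<lambda>_. 0)" by (rule restr_d_zero[OF \<delta>])
      then show ?thesis unfolding h_def using False nt I_zero by simp
    qed
  qed
  have f1: "\<forall>x\<in>S. \<forall>y\<in>S. f (\<lambda>\<eta>. x \<eta> + y \<eta>) = f x + f y"
  proof (intro ballI)
    fix x y assume xy: "x \<in> S" "y \<in> S"
    have "(\<lambda>\<eta>. x \<eta> + y \<eta>) \<in> S" by (rule space_add[OF xy])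
    then show "f (\<lambda>\<eta>. x \<eta> + y \<eta>) = f x + f y" unfolding f_def hadd using xy by simp
  qed
  have f2: "\<forall>x\<in>S. \<forall>c. f (\<lambda>\<eta>. c * x \<eta>) = c * f x"
  proof (intro ballI allI)
    fix x c assume x: "x \<in> S"
    have "(\<lambda>\<eta>. c * x \<eta>) \<in> S" by (rule space_scale[OF x])
    then show "f (\<lambda>\<eta>. c * x \<eta>) = c * f x" unfolding f_def hsc using x by (simp add: right_diff_distrib)
  qed
  have f3: "\<exists>C. \<forall>x\<in>S. \<bar>f x\<bar> \<le> C * supn x"
  proof (intro exI[of _ "1 + max C 0"] ballI)
    fix x assume x: "x \<in> S"
    have bx: "bnd x" by (rule space_bnd[OF x])
    have a: "\<bar>x \<gamma>\<bar> \<le> supn x" by (rule supn_ge[OF bx])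
    have b: "\<bar>h x\<bar> \<le> max C 0 * supn x" by (rule hbd[OF bx])
    have "\<bar>f x\<bar> = \<bar>x \<gamma> - h x\<bar>" unfolding f_def using x by simp
    also have "\<dots> \<le> supn x + max C 0 * supn x" using a b by linarith
    finally show "\<bar>f x\<bar> \<le> (1 + max C 0) * supn x" by (simp add: distrib_right)
  qed
  have f4: "\<forall>\<delta>\<in>BD_Gamma G. f (d \<delta>) = (if \<delta> = \<gamma> then 1 else 0)"
  proof
    fix \<delta> assume \<delta>: "\<delta> \<in> BD_Gamma G"
    have fd: "f (d \<delta>) = d \<delta> \<gamma> - h (d \<delta>)" unfolding f_def using d_space[OF \<delta>] by simp
    show "f (d \<delta>) = (if \<delta> = \<gamma> then 1 else 0)"
    proof (cases "BD_level G \<delta> < BD_level G \<gamma>")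
      case True
      then have "\<delta> \<noteq> \<gamma>" by auto
      then show ?thesis unfolding fd hval[OF \<delta>] using True by simp
    next
      case False
      then have le: "BD_level G \<gamma> \<le> BD_level G \<delta>" by simp
      show ?thesis unfolding fd hval[OF \<delta>] d_low[OF \<delta> \<gamma> le] using False by auto
    qed
  qed
  have f5: "\<forall>x. x \<notin> S \<longrightarrow> f x = 0" unfolding f_def by simp
  have df: "dpred G I \<gamma> f" unfolding dpred_def by (intro conjI f1 f2 f3 f4 f5)
  have "BD_dstar G I \<gamma> = f" by (rule dstar_eq[OF df])
  then show ?thesis using df by simp
qed

lemma dex_orig: "\<forall>\<delta>\<in>BD_Gamma G. dpred G I \<delta> (BD_dstar G I \<delta>)"
  using dstar_orig by blast

lemma proj_orig:
  assumes "finite E \<or> finite (- E)"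
  shows "ppred G I E (BD_proj G I E)"
proof -
  obtain P where P: "ppred G I E P"
  proof (cases "finite E")
    case True
    show ?thesis by (rule that[OF proj_fin[OF dex_orig levels_fin[OF finG True]]])
  next
    case False
    then have "finite (- E)" using assms by blast
    from proj_cofin[OF dex_orig levels_fin[OF finG this]] show ?thesis using that by blast
  qed
  have "BD_proj G I E = P" by (rule proj_eq[OF P])
  then show ?thesis using P by simp
qed

end


locale sd = bd +
  fixes \<Gamma>' :: "'a set"
  assumes sdet: "self_determined G I \<Gamma>'"
begin

abbreviation "G' \<equiv> sd_G G \<Gamma>'"
abbreviation "I' \<equiv> sd_I G I \<Gamma>'"
abbreviation "sq \<equiv> sd_q G \<Gamma>'"
abbreviation "QQ \<equiv> {q. \<Gamma>' \<inter> BD_Delta G q \<noteq> {}}"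

lemma subG: "\<Gamma>' \<subseteq> BD_Gamma G"
  using sdet[unfolded self_determined_def, THEN conjunct1] .

lemma infG': "infinite \<Gamma>'"
  using sdet[unfolded self_determined_def, THEN conjunct2, THEN conjunct1] .

lemma sdF: "\<gamma> \<in> \<Gamma>' \<Longrightarrow> \<exists>F a. finite F \<and> F \<subseteq> \<Gamma>' \<and> (\<forall>x\<in>S. BD_dstar G I \<gamma> x = (\<Sum>\<eta>\<in>F. a \<eta> * x \<eta>))"
  using sdet[unfolded self_determined_def, THEN conjunct2, THEN conjunct2, rule_format] .

lemma inG: "\<delta> \<in> \<Gamma>' \<Longrightarrow> \<delta> \<in> BD_Gamma G"
  using subG by (rule subsetD)

lemma Delta_lvl:
  assumes "\<delta> \<in> BD_Gamma G"
  shows "\<delta> \<in> BD_Delta G (BD_level G \<delta>)"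
proof (cases "BD_level G \<delta>")
  case 0
  then show ?thesis using lvl_in[OF assms] by simp
next
  case (Suc p)
  have a: "\<delta> \<in> G (Suc p)" using lvl_in[OF assms] Suc by simp
  have "\<delta> \<notin> G p"
  proof
    assume "\<delta> \<in> G p"
    then have "BD_level G \<delta> \<le> p" by (rule lvl_le)
    then show False using Suc by simp
  qed
  then show ?thesis using a Suc by simp
qed

lemma lvl_Q: "\<delta> \<in> \<Gamma>' \<Longrightarrow> BD_level G \<delta> \<in> QQ"
proof -
  assume d: "\<delta> \<in> \<Gamma>'"
  have "\<delta> \<in> BD_Delta G (BD_level G \<delta>)" by (rule Delta_lvl[OF inG[OF d]])
  then have "\<delta> \<in> \<Gamma>' \<inter> BD_Delta G (BD_level G \<delta>)" using d by (rule IntI[rotated])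
  then show ?thesis by blast
qed

lemma infQ: "infinite QQ"
proof
  assume fin: "finite QQ"
  have "\<Gamma>' \<subseteq> (\<Union>q\<in>QQ. G q)"
  proof
    fix \<delta> assume d: "\<delta> \<in> \<Gamma>'"
    show "\<delta> \<in> (\<Union>q\<in>QQ. G q)" by (rule UN_I[where B=G, OF lvl_Q[OF d] lvl_in[OF inG[OF d]]])
  qed
  moreover have "finite (\<Union>q\<in>QQ. G q)" by (rule finite_UN_I[OF fin finG])
  ultimately have "finite \<Gamma>'" by (rule finite_subset)
  then show False using infG' by simp
qed

lemma sq_le: "sq s \<le> sq t \<longleftrightarrow> s \<le> t"
  unfolding sd_q_def by (rule enumerate_mono_le_iff[OF infQ])

lemma sq_inj: "inj sq"
  unfolding sd_q_def by (rule inj_enumerate[OF infQ])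

lemma sq_ex: "\<delta> \<in> \<Gamma>' \<Longrightarrow> \<exists>s. sq s = BD_level G \<delta>"
  unfolding sd_q_def by (rule enumerate_Ex[OF infQ lvl_Q])

lemma lvl_new:
  assumes d: "\<delta> \<in> \<Gamma>'"
  shows "sq (BD_level G' \<delta>) = BD_level G \<delta>"
proof -
  obtain s0 where s0: "sq s0 = BD_level G \<delta>" using sq_ex[OF d] by blast
  have "BD_level G' \<delta> = s0" unfolding BD_level_def
  proof (rule Least_equality)
    have "\<delta> \<in> G (sq s0)" using lvl_in[OF inG[OF d]] s0 by simp
    then show "\<delta> \<in> G' s0" unfolding sd_G_def using d by simp
  next
    fix s assume "\<delta> \<in> G' s"
    then have "\<delta> \<in> G (sq s)" unfolding sd_G_def by simp
    then have "BD_level G \<delta> \<le> sq s" by (rule lvl_le)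
    then have "sq s0 \<le> sq s" using s0 by simp
    then show "s0 \<le> s" using sq_le by simp
  qed
  then show ?thesis using s0 by simp
qed

lemma Gamma_new: "BD_Gamma G' = \<Gamma>'"
proof
  show "BD_Gamma G' \<subseteq> \<Gamma>'" unfolding BD_Gamma_def sd_G_def by blast
next
  show "\<Gamma>' \<subseteq> BD_Gamma G'"
  proof
    fix \<delta> assume d: "\<delta> \<in> \<Gamma>'"
    obtain s0 where s0: "sq s0 = BD_level G \<delta>" using sq_ex[OF d] by blast
    have "\<delta> \<in> G (sq s0)" using lvl_in[OF inG[OF d]] s0 by simp
    then have "\<delta> \<in> G' s0" unfolding sd_G_def using d by simp
    then show "\<delta> \<in> BD_Gamma G'" by (rule G_Gamma)
  qed
qed

lemma d_new: "\<delta> \<in> \<Gamma>' \<Longrightarrow> BD_d G' I' \<delta> = restr \<Gamma>' (BD_d G I \<delta>)"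
  unfolding d_ee sd_I_def by (simp only: lvl_new)

lemma finG_new: "finite (G' s)"
  unfolding sd_G_def using finG by simp

lemma dbnd_new: "\<delta> \<in> BD_Gamma G' \<Longrightarrow> bnd (BD_d G' I' \<delta>)"
proof -
  assume "\<delta> \<in> BD_Gamma G'"
  then have d: "\<delta> \<in> \<Gamma>'" using Gamma_new by simp
  obtain M where M: "\<forall>\<eta>. \<bar>BD_d G I \<delta> \<eta>\<bar> \<le> M" using d_bnd[OF inG[OF d]] unfolding bnd_def by blast
  have "\<bar>restr \<Gamma>' (BD_d G I \<delta>) \<eta>\<bar> \<le> M" for \<eta>
  proof -
    have m: "\<bar>BD_d G I \<delta> \<eta>\<bar> \<le> M" using M by blast
    then have "0 \<le> M" by linarith
    then show ?thesis using m unfolding restr_def by simp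
  qed
  then show ?thesis unfolding d_new[OF d] bnd_def by blast
qed

sublocale new: gen G' I'
  by unfold_locales (rule dbnd_new)

lemma dstar_new:
  assumes \<gamma>: "\<gamma> \<in> \<Gamma>'"
  shows "dpred G' I' \<gamma> (BD_dstar G' I' \<gamma>)"
proof -
  obtain F0 a where F0: "finite F0" "F0 \<subseteq> \<Gamma>'" and fa: "\<forall>x\<in>S. BD_dstar G I \<gamma> x = (\<Sum>\<eta>\<in>F0. a \<eta> * x \<eta>)"
    using sdF[OF \<gamma>] by blast
  define f where "f x = (if x \<in> BD_space G' I' then (\<Sum>\<eta>\<in>F0. a \<eta> * x \<eta>) else 0)" for x
  have f1: "\<forall>x\<in>BD_space G' I'. \<forall>y\<in>BD_space G' I'. f (\<lambda>\<eta>. x \<eta> + y \<eta>) = f x + f y"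
  proof (intro ballI)
    fix x y assume xy: "x \<in> BD_space G' I'" "y \<in> BD_space G' I'"
    have "(\<lambda>\<eta>. x \<eta> + y \<eta>) \<in> BD_space G' I'" by (rule new.space_add[OF xy])
    then show "f (\<lambda>\<eta>. x \<eta> + y \<eta>) = f x + f y" unfolding f_def using xy
      by (simp add: distrib_left sum.distrib)
  qed
  have f2: "\<forall>x\<in>BD_space G' I'. \<forall>c. f (\<lambda>\<eta>. c * x \<eta>) = c * f x"
  proof (intro ballI allI)
    fix x c assume x: "x \<in> BD_space G' I'"
    have "(\<lambda>\<eta>. c * x \<eta>) \<in> BD_space G' I'" by (rule new.space_scale[OF x])
    then show "f (\<lambda>\<eta>. c * x \<eta>) = c * f x" unfolding f_def using x
      by (simp add: sum_distrib_left mult_ac)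
  qed
  have f3: "\<exists>C. \<forall>x\<in>BD_space G' I'. \<bar>f x\<bar> \<le> C * supn x"
  proof (intro exI[of _ "\<Sum>\<eta>\<in>F0. \<bar>a \<eta>\<bar>"] ballI)
    fix x assume x: "x \<in> BD_space G' I'"
    have bx: "bnd x" by (rule new.space_bnd[OF x])
    have "\<bar>f x\<bar> = \<bar>\<Sum>\<eta>\<in>F0. a \<eta> * x \<eta>\<bar>" unfolding f_def using x by simp
    also have "\<dots> \<le> (\<Sum>\<eta>\<in>F0. \<bar>a \<eta> * x \<eta>\<bar>)" by (rule sum_abs)
    also have "\<dots> \<le> (\<Sum>\<eta>\<in>F0. \<bar>a \<eta>\<bar> * supn x)"
    proof (rule sum_mono)
      fix \<eta> show "\<bar>a \<eta> * x \<eta>\<bar> \<le> \<bar>a \<eta>\<bar> * supn x"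
        unfolding abs_mult by (rule mult_left_mono[OF supn_ge[OF bx] abs_ge_zero])
    qed
    also have "\<dots> = (\<Sum>\<eta>\<in>F0. \<bar>a \<eta>\<bar>) * supn x" by (rule sum_distrib_right[symmetric])
    finally show "\<bar>f x\<bar> \<le> (\<Sum>\<eta>\<in>F0. \<bar>a \<eta>\<bar>) * supn x" .
  qed
  have f4: "\<forall>\<delta>\<in>BD_Gamma G'. f (BD_d G' I' \<delta>) = (if \<delta> = \<gamma> then 1 else 0)"
  proof
    fix \<delta> assume \<delta>': "\<delta> \<in> BD_Gamma G'"
    then have \<delta>: "\<delta> \<in> \<Gamma>'" using Gamma_new by simp
    have ds: "BD_d G' I' \<delta> \<in> BD_space G' I'" by (rule new.d_space[OF \<delta>'])
    have "f (BD_d G' I' \<delta>) = (\<Sum>\<eta>\<in>F0. a \<eta> * restr \<Gamma>' (BD_d G I \<delta>) \<eta>)"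
      unfolding f_def using ds d_new[OF \<delta>] by simp
    also have "\<dots> = (\<Sum>\<eta>\<in>F0. a \<eta> * BD_d G I \<delta> \<eta>)"
    proof (rule sum.cong[OF refl])
      fix \<eta> assume "\<eta> \<in> F0"
      then have "\<eta> \<in> \<Gamma>'" using F0(2) by blast
      then show "a \<eta> * restr \<Gamma>' (BD_d G I \<delta>) \<eta> = a \<eta> * BD_d G I \<delta> \<eta>" unfolding restr_def by simp
    qed
    also have "\<dots> = BD_dstar G I \<gamma> (BD_d G I \<delta>)"
      using fa[rule_format, OF d_space[OF inG[OF \<delta>]]] by simp
    also have "\<dots> = (if \<delta> = \<gamma> then 1 else 0)"
      using dstar_orig[OF inG[OF \<gamma>], unfolded dpred_def, THEN conjunct2, THEN conjunct2, THEN conjunct2,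
          THEN conjunct1, rule_format, OF inG[OF \<delta>]] .
    finally show "f (BD_d G' I' \<delta>) = (if \<delta> = \<gamma> then 1 else 0)" .
  qed
  have f5: "\<forall>x. x \<notin> BD_space G' I' \<longrightarrow> f x = 0" unfolding f_def by simp
  have df: "dpred G' I' \<gamma> f" unfolding dpred_def by (intro conjI f1 f2 f3 f4 f5)
  have "BD_dstar G' I' \<gamma> = f" by (rule new.dstar_eq[OF df])
  then show ?thesis using df by simp
qed

lemma dex_new: "\<forall>\<delta>\<in>BD_Gamma G'. dpred G' I' \<delta> (BD_dstar G' I' \<delta>)"
proof
  fix \<delta> assume "\<delta> \<in> BD_Gamma G'"
  then have "\<delta> \<in> \<Gamma>'" using Gamma_new by simp
  then show "dpred G' I' \<delta> (BD_dstar G' I' \<delta>)" by (rule dstar_new)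
qed

lemma proj_new:
  assumes "finite E \<or> finite (- E)"
  shows "ppred G' I' E (BD_proj G' I' E)"
proof -
  obtain P where P: "ppred G' I' E P"
  proof (cases "finite E")
    case True
    show ?thesis by (rule that[OF new.proj_fin[OF dex_new levels_fin[OF finG_new True]]])
  next
    case False
    then have "finite (- E)" using assms by blast
    from new.proj_cofin[OF dex_new levels_fin[OF finG_new this]] show ?thesis using that by blast
  qed
  have "BD_proj G' I' E = P" by (rule new.proj_eq[OF P])
  then show ?thesis using P by simp
qed


lemma main:
  fixes lam :: "'a \<Rightarrow> real" and E :: "'a \<Rightarrow> nat set"
  assumes \<gamma>: "\<gamma> \<in> \<Gamma>'" and F: "finite F" "F \<subseteq> \<Gamma>'"
    and Eint: "\<forall>\<eta>\<in>F. nat_interval (E \<eta>)"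
    and hyp: "\<forall>x\<in>BD_space G I. BD_cstar G I \<gamma> x = (\<Sum>\<eta>\<in>F. lam \<eta> * BD_proj G I (E \<eta>) x \<eta>)"
  shows "\<forall>x\<in>BD_space G' I'. BD_cstar G' I' \<gamma> x =
             (\<Sum>\<eta>\<in>F. lam \<eta> * BD_proj G' I' {s. sq s \<in> E \<eta>} x \<eta>)"
proof
  fix x0 assume x0: "x0 \<in> BD_space G' I'"
  define E' where "E' \<eta> = {s. sq s \<in> E \<eta>}" for \<eta>
  have Efc: "finite (E \<eta>) \<or> finite (- E \<eta>)" if "\<eta> \<in> F" for \<eta>
    using interval_cases Eint that by blast
  have E'fc: "finite (E' \<eta>) \<or> finite (- E' \<eta>)" if \<eta>: "\<eta> \<in> F" for \<eta>
  proof (cases "finite (E \<eta>)")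
    case True
    have "E' \<eta> = sq -` E \<eta>" unfolding E'_def by auto
    then have "finite (E' \<eta>)" using finite_vimageI[OF True sq_inj] by simp
    then show ?thesis by simp
  next
    case False
    then have fc: "finite (- E \<eta>)" using Efc[OF \<eta>] by simp
    have "- E' \<eta> = sq -` (- E \<eta>)" unfolding E'_def by auto
    then have "finite (- E' \<eta>)" using finite_vimageI[OF fc sq_inj] by simp
    then show ?thesis by simp
  qed
  have PP: "ppred G I (E \<eta>) (BD_proj G I (E \<eta>))" if "\<eta> \<in> F" for \<eta>
    by (rule proj_orig[OF Efc[OF that]])
  have PN: "ppred G' I' (E' \<eta>) (BD_proj G' I' (E' \<eta>))" if "\<eta> \<in> F" for \<eta>
    by (rule proj_new[OF E'fc[OF that]])
  note DN = dstar_new[OF \<gamma>, unfolded dpred_def]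
  define f1 where "f1 x = x \<gamma> - BD_dstar G' I' \<gamma> x" for x
  define f2 where "f2 x = (\<Sum>\<eta>\<in>F. lam \<eta> * BD_proj G' I' (E' \<eta>) x \<eta>)" for x
  have c1: "\<forall>x\<in>BD_space G' I'. \<forall>y\<in>BD_space G' I'. f1 (\<lambda>\<eta>. x \<eta> + y \<eta>) = f1 x + f1 y"
  proof (intro ballI)
    fix x y assume xy: "x \<in> BD_space G' I'" "y \<in> BD_space G' I'"
    have "BD_dstar G' I' \<gamma> (\<lambda>\<eta>. x \<eta> + y \<eta>) = BD_dstar G' I' \<gamma> x + BD_dstar G' I' \<gamma> y"
      using DN[THEN conjunct1, rule_format, OF xy] .
    then show "f1 (\<lambda>\<eta>. x \<eta> + y \<eta>) = f1 x + f1 y" unfolding f1_def by simp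
  qed
  have c2: "\<forall>x\<in>BD_space G' I'. \<forall>c. f1 (\<lambda>\<eta>. c * x \<eta>) = c * f1 x"
  proof (intro ballI allI)
    fix x c assume x: "x \<in> BD_space G' I'"
    have "BD_dstar G' I' \<gamma> (\<lambda>\<eta>. c * x \<eta>) = c * BD_dstar G' I' \<gamma> x"
      using DN[THEN conjunct2, THEN conjunct1, rule_format, OF x] .
    then show "f1 (\<lambda>\<eta>. c * x \<eta>) = c * f1 x" unfolding f1_def by (simp add: right_diff_distrib)
  qed
  have c3: "\<exists>C. \<forall>x\<in>BD_space G' I'. \<bar>f1 x\<bar> \<le> C * supn x"
  proof -
    obtain C where C: "\<forall>x\<in>BD_space G' I'. \<bar>BD_dstar G' I' \<gamma> x\<bar> \<le> C * supn x"
      using DN[THEN conjunct2, THEN conjunct2, THEN conjunct1] by blast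
    show ?thesis
    proof (intro exI[of _ "1 + C"] ballI)
      fix x assume x: "x \<in> BD_space G' I'"
      have bx: "bnd x" by (rule new.space_bnd[OF x])
      have a: "\<bar>x \<gamma>\<bar> \<le> supn x" by (rule supn_ge[OF bx])
      have b: "\<bar>BD_dstar G' I' \<gamma> x\<bar> \<le> C * supn x" using C x by blast
      have "\<bar>f1 x\<bar> \<le> supn x + C * supn x" unfolding f1_def using a b by linarith
      then show "\<bar>f1 x\<bar> \<le> (1 + C) * supn x" by (simp add: distrib_right)
    qed
  qed
  have c4: "\<forall>x\<in>BD_space G' I'. \<forall>y\<in>BD_space G' I'. f2 (\<lambda>\<eta>. x \<eta> + y \<eta>) = f2 x + f2 y"
  proof (intro ballI)
    fix x y assume xy: "x \<in> BD_space G' I'" "y \<in> BD_space G' I'"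
    have "f2 (\<lambda>\<eta>. x \<eta> + y \<eta>) = (\<Sum>\<eta>\<in>F. lam \<eta> * BD_proj G' I' (E' \<eta>) x \<eta> + lam \<eta> * BD_proj G' I' (E' \<eta>) y \<eta>)"
      unfolding f2_def
    proof (rule sum.cong[OF refl])
      fix \<eta> assume \<eta>: "\<eta> \<in> F"
      have "BD_proj G' I' (E' \<eta>) (\<lambda>\<eta>. x \<eta> + y \<eta>) = (\<lambda>\<zeta>. BD_proj G' I' (E' \<eta>) x \<zeta> + BD_proj G' I' (E' \<eta>) y \<zeta>)"
        using PN[OF \<eta>, unfolded ppred_def, THEN conjunct2, THEN conjunct1, rule_format, OF xy] .
      then show "lam \<eta> * BD_proj G' I' (E' \<eta>) (\<lambda>\<eta>. x \<eta> + y \<eta>) \<eta> = lam \<eta> * BD_proj G' I' (E' \<eta>) x \<eta> + lam \<eta> * BD_proj G' I' (E' \<eta>) y \<eta>"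
        by (simp add: distrib_left)
    qed
    also have "\<dots> = f2 x + f2 y" unfolding f2_def by (rule sum.distrib)
    finally show "f2 (\<lambda>\<eta>. x \<eta> + y \<eta>) = f2 x + f2 y" .
  qed
  have c5: "\<forall>x\<in>BD_space G' I'. \<forall>c. f2 (\<lambda>\<eta>. c * x \<eta>) = c * f2 x"
  proof (intro ballI allI)
    fix x c assume x: "x \<in> BD_space G' I'"
    have "f2 (\<lambda>\<eta>. c * x \<eta>) = (\<Sum>\<eta>\<in>F. c * (lam \<eta> * BD_proj G' I' (E' \<eta>) x \<eta>))"
      unfolding f2_def
    proof (rule sum.cong[OF refl])
      fix \<eta> assume \<eta>: "\<eta> \<in> F"
      have "BD_proj G' I' (E' \<eta>) (\<lambda>\<eta>. c * x \<eta>) = (\<lambda>\<zeta>. c * BD_proj G' I' (E' \<eta>) x \<zeta>)"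
        using PN[OF \<eta>, unfolded ppred_def, THEN conjunct2, THEN conjunct2, THEN conjunct1, rule_format, OF x] .
      then show "lam \<eta> * BD_proj G' I' (E' \<eta>) (\<lambda>\<eta>. c * x \<eta>) \<eta> = c * (lam \<eta> * BD_proj G' I' (E' \<eta>) x \<eta>)"
        by (simp add: mult_ac)
    qed
    also have "\<dots> = c * f2 x" unfolding f2_def by (rule sum_distrib_left[symmetric])
    finally show "f2 (\<lambda>\<eta>. c * x \<eta>) = c * f2 x" .
  qed
  have c6: "\<exists>C. \<forall>x\<in>BD_space G' I'. \<bar>f2 x\<bar> \<le> C * supn x"
  proof -
    have "\<forall>\<eta>\<in>F. \<exists>C. \<forall>x\<in>BD_space G' I'. \<forall>\<zeta>. \<bar>BD_proj G' I' (E' \<eta>) x \<zeta>\<bar> \<le> C * supn x"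
      using PN[unfolded ppred_def] by blast
    then obtain Cf where Cf: "\<forall>\<eta>\<in>F. \<forall>x\<in>BD_space G' I'. \<forall>\<zeta>. \<bar>BD_proj G' I' (E' \<eta>) x \<zeta>\<bar> \<le> Cf \<eta> * supn x"
      by (rule bchoice[THEN exE])
    show ?thesis
    proof (intro exI[of _ "\<Sum>\<eta>\<in>F. \<bar>lam \<eta>\<bar> * \<bar>Cf \<eta>\<bar>"] ballI)
      fix x assume x: "x \<in> BD_space G' I'"
      have sx: "0 \<le> supn x" by (rule supn_nonneg[OF new.space_bnd[OF x]])
      have "\<bar>f2 x\<bar> \<le> (\<Sum>\<eta>\<in>F. \<bar>lam \<eta> * BD_proj G' I' (E' \<eta>) x \<eta>\<bar>)" unfolding f2_def by (rule sum_abs)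
      also have "\<dots> \<le> (\<Sum>\<eta>\<in>F. (\<bar>lam \<eta>\<bar> * \<bar>Cf \<eta>\<bar>) * supn x)"
      proof (rule sum_mono)
        fix \<eta> assume \<eta>: "\<eta> \<in> F"
        have "\<bar>BD_proj G' I' (E' \<eta>) x \<eta>\<bar> \<le> Cf \<eta> * supn x" using Cf \<eta> x by blast
        also have "\<dots> \<le> \<bar>Cf \<eta>\<bar> * supn x" by (rule mult_right_mono[OF abs_ge_self sx])
        finally have a: "\<bar>BD_proj G' I' (E' \<eta>) x \<eta>\<bar> \<le> \<bar>Cf \<eta>\<bar> * supn x" .
        have "\<bar>lam \<eta> * BD_proj G' I' (E' \<eta>) x \<eta>\<bar> = \<bar>lam \<eta>\<bar> * \<bar>BD_proj G' I' (E' \<eta>) x \<eta>\<bar>" by (rule abs_mult)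
        also have "\<dots> \<le> \<bar>lam \<eta>\<bar> * (\<bar>Cf \<eta>\<bar> * supn x)" by (rule mult_left_mono[OF a abs_ge_zero])
        also have "\<dots> = (\<bar>lam \<eta>\<bar> * \<bar>Cf \<eta>\<bar>) * supn x" by (simp only: mult_ac)
        finally show "\<bar>lam \<eta> * BD_proj G' I' (E' \<eta>) x \<eta>\<bar> \<le> (\<bar>lam \<eta>\<bar> * \<bar>Cf \<eta>\<bar>) * supn x" .
      qed
      also have "\<dots> = (\<Sum>\<eta>\<in>F. \<bar>lam \<eta>\<bar> * \<bar>Cf \<eta>\<bar>) * supn x" by (rule sum_distrib_right[symmetric])
      finally show "\<bar>f2 x\<bar> \<le> (\<Sum>\<eta>\<in>F. \<bar>lam \<eta>\<bar> * \<bar>Cf \<eta>\<bar>) * supn x" .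
    qed
  qed
  have ag: "\<forall>\<delta>\<in>BD_Gamma G'. f1 (BD_d G' I' \<delta>) = f2 (BD_d G' I' \<delta>)"
  proof
    fix \<delta> assume \<delta>': "\<delta> \<in> BD_Gamma G'"
    then have \<delta>: "\<delta> \<in> \<Gamma>'" using Gamma_new by simp
    have \<delta>G: "\<delta> \<in> BD_Gamma G" by (rule inG[OF \<delta>])
    have dsn: "BD_dstar G' I' \<gamma> (BD_d G' I' \<delta>) = (if \<delta> = \<gamma> then 1 else 0)"
      using DN[THEN conjunct2, THEN conjunct2, THEN conjunct2, THEN conjunct1, rule_format, OF \<delta>'] .
    have dso: "BD_dstar G I \<gamma> (BD_d G I \<delta>) = (if \<delta> = \<gamma> then 1 else 0)"
      using dstar_orig[OF inG[OF \<gamma>], unfolded dpred_def, THEN conjunct2, THEN conjunct2, THEN conjunct2,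
          THEN conjunct1, rule_format, OF \<delta>G] .
    have dg: "BD_d G' I' \<delta> \<gamma> = BD_d G I \<delta> \<gamma>" unfolding d_new[OF \<delta>] restr_def using \<gamma> by simp
    have "f1 (BD_d G' I' \<delta>) = BD_d G I \<delta> \<gamma> - (if \<delta> = \<gamma> then 1 else 0)"
      unfolding f1_def dsn dg ..
    also have "\<dots> = BD_cstar G I \<gamma> (BD_d G I \<delta>)" unfolding BD_cstar_def dso ..
    also have "\<dots> = (\<Sum>\<eta>\<in>F. lam \<eta> * BD_proj G I (E \<eta>) (BD_d G I \<delta>) \<eta>)"
      using hyp[rule_format, OF d_space[OF \<delta>G]] .
    also have "\<dots> = f2 (BD_d G' I' \<delta>)" unfolding f2_def
    proof (rule sum.cong[OF refl])
      fix \<eta> assume \<eta>: "\<eta> \<in> F"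
      then have \<eta>': "\<eta> \<in> \<Gamma>'" using F(2) by blast
      have p1: "BD_proj G I (E \<eta>) (BD_d G I \<delta>) = (if BD_level G \<delta> \<in> E \<eta> then BD_d G I \<delta> else (\<lambda>_. 0))"
        using PP[OF \<eta>, unfolded ppred_def, THEN conjunct2, THEN conjunct2, THEN conjunct2, THEN conjunct2,
            THEN conjunct1, rule_format, OF \<delta>G] .
      have p2: "BD_proj G' I' (E' \<eta>) (BD_d G' I' \<delta>) = (if BD_level G' \<delta> \<in> E' \<eta> then BD_d G' I' \<delta> else (\<lambda>_. 0))"
        using PN[OF \<eta>, unfolded ppred_def, THEN conjunct2, THEN conjunct2, THEN conjunct2, THEN conjunct2,
            THEN conjunct1, rule_format, OF \<delta>'] .
      have lv: "BD_level G' \<delta> \<in> E' \<eta> \<longleftrightarrow> BD_level G \<delta> \<in> E \<eta>"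
        unfolding E'_def using lvl_new[OF \<delta>] by simp
      have dv: "BD_d G' I' \<delta> \<eta> = BD_d G I \<delta> \<eta>" unfolding d_new[OF \<delta>] restr_def using \<eta>' by simp
      show "lam \<eta> * BD_proj G I (E \<eta>) (BD_d G I \<delta>) \<eta> = lam \<eta> * BD_proj G' I' (E' \<eta>) (BD_d G' I' \<delta>) \<eta>"
        unfolding p1 p2 lv using dv by simp
    qed
    finally show "f1 (BD_d G' I' \<delta>) = f2 (BD_d G' I' \<delta>)" .
  qed
  have "f1 x0 = f2 x0" by (rule new.func_unique[OF c1 c2 c3 c4 c5 c6 ag x0])
  then show "BD_cstar G' I' \<gamma> x0 = (\<Sum>\<eta>\<in>F. lam \<eta> * BD_proj G' I' {s. sq s \<in> E \<eta>} x0 \<eta>)"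
    unfolding f1_def f2_def E'_def BD_cstar_def .
qed

end

theorem proposition1p13:
  fixes G :: "nat \<Rightarrow> 'a set"
    and I :: "nat \<Rightarrow> ('a \<Rightarrow> real) \<Rightarrow> ('a \<Rightarrow> real)"
    and \<Gamma>' :: "'a set" and \<gamma> :: 'a and F :: "'a set"
    and lam :: "'a \<Rightarrow> real" and E :: "'a \<Rightarrow> nat set"
  assumes "BD_datum G I"
    and "self_determined G I \<Gamma>'"
    and "\<gamma> \<in> \<Gamma>'"
    and "finite F" and "F \<subseteq> \<Gamma>'"
    and "\<forall>\<eta>\<in>F. nat_interval (E \<eta>)"
    and "\<forall>x\<in>BD_space G I.
           BD_cstar G I \<gamma> x = (\<Sum>\<eta>\<in>F. lam \<eta> * BD_proj G I (E \<eta>) x \<eta>)"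
  shows "\<forall>x\<in>BD_space (sd_G G \<Gamma>') (sd_I G I \<Gamma>').
           BD_cstar (sd_G G \<Gamma>') (sd_I G I \<Gamma>') \<gamma> x =
             (\<Sum>\<eta>\<in>F. lam \<eta> * BD_proj (sd_G G \<Gamma>') (sd_I G I \<Gamma>') {s. sd_q G \<Gamma>' s \<in> E \<eta>} x \<eta>)"
proof -
  interpret sd G I \<Gamma>'
    by (rule sd.intro[OF bd.intro[OF assms(1)] sd_axioms.intro[OF assms(2)]])
  show ?thesis by (rule main[OF assms(3) assms(4) assms(5) assms(6) assms(7)])
qed

end
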